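(* Let $Q$ be a set of polynomial equality constraints, each of degree at most $k$, in $n$ pairs of twin variables $x_i,\bar x_i$ ($i\in[n]$). If there is an SOS refutation of $Q$ with $s$ many distinct significant monomials, then there is an SOS refutation of $Q$ of degree at most $4\sqrt{2(n+1)\log(s)}+k+4$.
   Context: Variables come in $n$ twin pairs $x_i,\bar x_i$, $i\in[n]$ (intended Boolean, with $\bar x_i=1-x_i$). Given $Q=\{q_1=0,\dots,q_m=0\}$ and a polynomial $p$, an SOS proof of non-negativity of $p$ from $Q$ is a polynomial identity $$p=\sum_{i\in[k']} r_i^2+\sum_{q\in Q} t_q\,q+\sum_{i\in[n]}\big(u_i(x_i^2-x_i)+v_i(x_i+\bar x_i-1)\big)$$ with arbitrary real polynomials $r_i,t_q,u_i,v_i$. An SOS refutation of $Q$ is an SOS proof of non-negativity of $-1$. Its degree is the maximum of $\deg(r_i^2)$, $\deg(t_q q)$, $\deg(u_i(x_i^2-x_i))$, $\deg(v_i(x_i+\bar x_i-1))$. The significant monomials of the proof are the monomials occurring in the polynomials $r_i$ and $t_q$. *)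

theory Defs
  imports Complex_Main "HOL-Library.Poly_Mapping"
begin

text \<open>Variables: (i, True) stands for x_i and (i, False) for the twin variable bar x_i.\<close>

type_synonym var = "nat \<times> bool"
type_synonym monom = "var \<Rightarrow>\<^sub>0 nat"
type_synonym rpoly = "monom \<Rightarrow>\<^sub>0 real"

definition Var :: "var \<Rightarrow> rpoly" where
  "Var v = Poly_Mapping.single (Poly_Mapping.single v 1) 1"

definition monom_deg :: "monom \<Rightarrow> nat" where
  "monom_deg m = (\<Sum>v\<in>Poly_Mapping.keys m. Poly_Mapping.lookup m v)"

definition pdeg :: "rpoly \<Rightarrow> nat" where
  "pdeg p = Max (insert 0 (monom_deg ` Poly_Mapping.keys p))"

definition pvars :: "rpoly \<Rightarrow> var set" where
  "pvars p = (\<Union>m\<in>Poly_Mapping.keys p. Poly_Mapping.keys m)"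

definition twin_vars :: "nat \<Rightarrow> var set" where
  "twin_vars n = {(i, b). i < n}"

definition sos_refutation ::
  "nat \<Rightarrow> rpoly list \<Rightarrow> rpoly list \<Rightarrow> rpoly list \<Rightarrow> (nat \<Rightarrow> rpoly) \<Rightarrow> (nat \<Rightarrow> rpoly) \<Rightarrow> bool" where
  "sos_refutation n Q rs ts us vs \<longleftrightarrow>
     length ts = length Q \<and>
     (\<forall>r\<in>set rs. pvars r \<subseteq> twin_vars n) \<and>
     (\<forall>t\<in>set ts. pvars t \<subseteq> twin_vars n) \<and>
     (\<forall>i<n. pvars (us i) \<subseteq> twin_vars n \<and> pvars (vs i) \<subseteq> twin_vars n) \<and>
     - 1 = (\<Sum>r\<leftarrow>rs. r * r)
           + (\<Sum>j<length Q. ts ! j * Q ! j)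
           + (\<Sum>i<n. us i * (Var (i, True) * Var (i, True) - Var (i, True))
                     + vs i * (Var (i, True) + Var (i, False) - 1))"

definition sos_degree ::
  "nat \<Rightarrow> rpoly list \<Rightarrow> rpoly list \<Rightarrow> rpoly list \<Rightarrow> (nat \<Rightarrow> rpoly) \<Rightarrow> (nat \<Rightarrow> rpoly) \<Rightarrow> nat" where
  "sos_degree n Q rs ts us vs =
     Max ({0} \<union> {pdeg (r * r) | r. r \<in> set rs}
              \<union> {pdeg (ts ! j * Q ! j) | j. j < length Q}
              \<union> {pdeg (us i * (Var (i, True) * Var (i, True) - Var (i, True))) | i. i < n}
              \<union> {pdeg (vs i * (Var (i, True) + Var (i, False) - 1)) | i. i < n})"

definition significant_monomials :: "rpoly list \<Rightarrow> rpoly list \<Rightarrow> monom set" where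
  "significant_monomials rs ts = (\<Union>p\<in>set rs \<union> set ts. Poly_Mapping.keys p)"

end

theory Submission
  imports Defs
begin

abbreviation lk where "lk \<equiv> Poly_Mapping.lookup"
abbreviation ks where "ks \<equiv> Poly_Mapping.keys"
abbreviation sg where "sg \<equiv> Poly_Mapping.single"

lemma poly_expand: "(p::'a \<Rightarrow>\<^sub>0 'b::comm_monoid_add) = (\<Sum>m\<in>ks p. sg m (lk p m))"
proof (rule poly_mapping_eqI)
  fix k
  show "lk p k = lk (\<Sum>m\<in>ks p. sg m (lk p m)) k"
    by (cases "k \<in> ks p") (auto simp: lookup_sum lookup_single when_def in_keys_iff)
qed

definition mval :: "(var \<Rightarrow> real) \<Rightarrow> monom \<Rightarrow> real" where
  "mval a m = (\<Prod>v\<in>ks m. a v ^ lk m v)"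

definition eval :: "(var \<Rightarrow> real) \<Rightarrow> rpoly \<Rightarrow> real" where
  "eval a p = (\<Sum>m\<in>ks p. lk p m * mval a m)"

lemma eval_superset: "finite S \<Longrightarrow> ks p \<subseteq> S \<Longrightarrow> eval a p = (\<Sum>m\<in>S. lk p m * mval a m)"
  unfolding eval_def by (rule sum.mono_neutral_left) (auto simp: in_keys_iff)

lemma mval_superset: "finite S \<Longrightarrow> ks m \<subseteq> S \<Longrightarrow> mval a m = (\<Prod>v\<in>S. a v ^ lk m v)"
  unfolding mval_def by (rule prod.mono_neutral_left) (auto simp: in_keys_iff)

lemma eval_add [simp]: "eval a (p + q) = eval a p + eval a q"
proof -
  let ?S = "ks p \<union> ks q \<union> ks (p+q)"
  have "eval a (p+q) = (\<Sum>m\<in>?S. lk (p+q) m * mval a m)" by (rule eval_superset) auto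
  also have "\<dots> = (\<Sum>m\<in>?S. lk p m * mval a m) + (\<Sum>m\<in>?S. lk q m * mval a m)"
    by (simp add: lookup_add distrib_right sum.distrib)
  also have "\<dots> = eval a p + eval a q"
    by (subst (1 2) eval_superset[where S="?S"]) auto
  finally show ?thesis .
qed

lemma eval_zero [simp]: "eval a 0 = 0" by (simp add: eval_def)

lemma eval_uminus [simp]: "eval a (- p) = - eval a p"
proof -
  have "eval a (-p) + eval a p = 0" using eval_add[of a "-p" p] by simp
  then show ?thesis by linarith
qed

lemma eval_diff [simp]: "eval a (p - q) = eval a p - eval a q"
  using eval_add[of a p "-q"] by simp

lemma eval_single [simp]: "eval a (sg m c) = c * mval a m"
  by (simp add: eval_def)

lemma eval_sum [simp]: "eval a (\<Sum>i\<in>I. f i) = (\<Sum>i\<in>I. eval a (f i))"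
  by (induction I rule: infinite_finite_induct) auto

lemma eval_sum_list [simp]: "eval a (sum_list (map f xs)) = (\<Sum>x\<leftarrow>xs. eval a (f x))"
  by (induction xs) auto

lemma keys_add_nat: "ks ((m1::monom) + m2) = ks m1 \<union> ks m2"
  by (auto simp: in_keys_iff lookup_add)

lemma mval_add: "mval a (m1 + m2) = mval a m1 * mval a m2"
proof -
  let ?S = "ks m1 \<union> ks m2"
  have "mval a (m1 + m2) = (\<Prod>v\<in>?S. a v ^ lk (m1+m2) v)"
    by (rule mval_superset) (auto simp: keys_add_nat)
  also have "\<dots> = (\<Prod>v\<in>?S. a v ^ lk m1 v) * (\<Prod>v\<in>?S. a v ^ lk m2 v)"
    by (simp add: lookup_add power_add prod.distrib)
  also have "\<dots> = mval a m1 * mval a m2"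
    by (subst (1 2) mval_superset[where S="?S"]) auto
  finally show ?thesis .
qed

lemma mval_zero [simp]: "mval a 0 = 1" by (simp add: mval_def)

lemma eval_mult [simp]: "eval a (p * q) = eval a p * eval a q"
proof -
  have "p * q = (\<Sum>m\<in>ks p. sg m (lk p m)) * (\<Sum>m'\<in>ks q. sg m' (lk q m'))"
    by (subst (1) poly_expand[of p], subst (1) poly_expand[of q]) (rule refl)
  also have "\<dots> = (\<Sum>m\<in>ks p. \<Sum>m'\<in>ks q. sg (m + m') (lk p m * lk q m'))"
    by (simp add: sum_product mult_single)
  finally have "eval a (p*q) = (\<Sum>m\<in>ks p. \<Sum>m'\<in>ks q. lk p m * lk q m' * mval a (m + m'))"
    by simp
  also have "\<dots> = (\<Sum>m\<in>ks p. lk p m * mval a m) * (\<Sum>m'\<in>ks q. lk q m' * mval a m')"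
    by (simp add: sum_product mval_add algebra_simps)
  finally show ?thesis by (simp add: eval_def)
qed

lemma eval_one [simp]: "eval a 1 = 1"
  using eval_single[of a 0 1] by simp

lemma mval_single: "mval a (sg v (Suc 0)) = a v" by (simp add: mval_def)

lemma eval_Var [simp]: "eval a (Var v) = a v"
  by (simp add: Var_def mval_single)

lemma eval_const [simp]: "eval a (sg 0 c) = c" by simp

lemma eval_of_real: "eval a (sg 0 c * p) = c * eval a p" by simp

lemma eval_power [simp]: "eval a (p ^ j) = eval a p ^ j"
  by (induction j) auto

lemma eval_prod [simp]: "eval a (\<Prod>i\<in>I. f i) = (\<Prod>i\<in>I. eval a (f i))"
  by (induction I rule: infinite_finite_induct) auto

definition dle :: "rpoly \<Rightarrow> nat \<Rightarrow> bool" where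
  "dle p d \<longleftrightarrow> (\<forall>m\<in>ks p. monom_deg m \<le> d)"

lemma pdeg_le_iff: "pdeg p \<le> d \<longleftrightarrow> dle p d"
  by (auto simp: pdeg_def dle_def)

lemma monom_deg_superset: "finite S \<Longrightarrow> ks m \<subseteq> S \<Longrightarrow> monom_deg m = (\<Sum>v\<in>S. lk m v)"
  unfolding monom_deg_def by (rule sum.mono_neutral_left) (auto simp: in_keys_iff)

lemma monom_deg_add: "monom_deg (m1 + m2) = monom_deg m1 + monom_deg m2"
proof -
  let ?S = "ks m1 \<union> ks m2"
  have "monom_deg (m1 + m2) = (\<Sum>v\<in>?S. lk (m1+m2) v)"
    by (rule monom_deg_superset) (auto simp: keys_add_nat)
  also have "\<dots> = (\<Sum>v\<in>?S. lk m1 v) + (\<Sum>v\<in>?S. lk m2 v)"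
    by (simp add: lookup_add sum.distrib)
  also have "\<dots> = monom_deg m1 + monom_deg m2"
    by (subst (1 2) monom_deg_superset[where S="?S"]) auto
  finally show ?thesis .
qed

lemma monom_deg_zero [simp]: "monom_deg 0 = 0" by (simp add: monom_deg_def)
lemma monom_deg_single [simp]: "monom_deg (sg v j) = j" by (simp add: monom_deg_def)

lemma dle_mono: "dle p d \<Longrightarrow> d \<le> d' \<Longrightarrow> dle p d'"
  by (auto simp: dle_def)

lemma dle_add: "dle p d \<Longrightarrow> dle q d \<Longrightarrow> dle (p + q) d"
  using keys_add[of p q] by (auto simp: dle_def)

lemma dle_zero [simp]: "dle 0 d" by (simp add: dle_def)

lemma dle_uminus [simp]: "dle (- p) d = dle p d"
  by (simp add: dle_def)

lemma dle_diff: "dle p d \<Longrightarrow> dle q d \<Longrightarrow> dle (p - q) d"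
  using dle_add[of p d "-q"] by simp

lemma dle_mult: "dle p d1 \<Longrightarrow> dle q d2 \<Longrightarrow> dle (p * q) (d1 + d2)"
  using keys_mult[of p q] by (fastforce simp: dle_def monom_deg_add intro: add_mono)

lemma dle_sum: "(\<And>i. i \<in> I \<Longrightarrow> dle (f i) d) \<Longrightarrow> dle (\<Sum>i\<in>I. f i) d"
  by (induction I rule: infinite_finite_induct) (auto intro: dle_add)

lemma dle_sum_list: "(\<And>x. x \<in> set xs \<Longrightarrow> dle (f x) d) \<Longrightarrow> dle (sum_list (map f xs)) d"
  by (induction xs) (auto intro: dle_add)

lemma dle_const [simp]: "dle (sg 0 c) d" by (simp add: dle_def)
lemma dle_one [simp]: "dle 1 d" by (simp add: dle_def)
lemma dle_Var: "dle (Var v) 1" by (simp add: dle_def Var_def)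

lemma dle_prod: assumes "finite I" "\<And>i. i \<in> I \<Longrightarrow> dle (f i) 1" shows "dle (\<Prod>i\<in>I. f i) (card I)"
  using assms proof (induction I rule: finite_induct)
  case (insert x F)
  then show ?case using dle_mult[of "f x" 1 "prod f F" "card F"] by simp
qed simp

definition vin :: "rpoly \<Rightarrow> var set \<Rightarrow> bool" where
  "vin p V \<longleftrightarrow> (\<forall>m\<in>ks p. ks m \<subseteq> V)"

lemma pvars_iff: "pvars p \<subseteq> V \<longleftrightarrow> vin p V"
  by (auto simp: pvars_def vin_def)

lemma vin_add: "vin p V \<Longrightarrow> vin q V \<Longrightarrow> vin (p + q) V"
  using keys_add[of p q] by (auto simp: vin_def)

lemma vin_zero [simp]: "vin 0 V" by (simp add: vin_def)
lemma vin_uminus [simp]: "vin (- p) V = vin p V" by (simp add: vin_def)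
lemma vin_diff: "vin p V \<Longrightarrow> vin q V \<Longrightarrow> vin (p - q) V"
  using vin_add[of p V "-q"] by simp
lemma vin_mult: "vin p V \<Longrightarrow> vin q V \<Longrightarrow> vin (p * q) V"
  using keys_mult[of p q] by (fastforce simp: vin_def keys_add_nat)
lemma vin_sum: "(\<And>i. i \<in> I \<Longrightarrow> vin (f i) V) \<Longrightarrow> vin (\<Sum>i\<in>I. f i) V"
  by (induction I rule: infinite_finite_induct) (auto intro: vin_add)
lemma vin_prod: "(\<And>i. i \<in> I \<Longrightarrow> vin (f i) V) \<Longrightarrow> vin (\<Prod>i\<in>I. f i) V"
proof (induction I rule: infinite_finite_induct)
  case (insert x F)
  then show ?case by (simp add: vin_mult)
qed (simp_all add: vin_def)
lemma vin_sum_list: "(\<And>x. x \<in> set xs \<Longrightarrow> vin (f x) V) \<Longrightarrow> vin (sum_list (map f xs)) V"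
  by (induction xs) (auto intro: vin_add)
lemma vin_const [simp]: "vin (sg 0 c) V" by (simp add: vin_def)
lemma vin_one [simp]: "vin 1 V" by (simp add: vin_def)
lemma vin_Var: "v \<in> V \<Longrightarrow> vin (Var v) V" by (simp add: vin_def Var_def)
lemma vin_mono: "vin p V \<Longrightarrow> V \<subseteq> W \<Longrightarrow> vin p W" by (auto simp: vin_def)

definition bv :: "(nat \<Rightarrow> bool) \<Rightarrow> var \<Rightarrow> real" where
  "bv b v = (if b (fst v) = snd v then 1 else 0)"

lemma bv_01: "bv b v = 0 \<or> bv b v = 1" by (simp add: bv_def)
lemma bv_sq [simp]: "bv b v * bv b v = bv b v" by (simp add: bv_def)
lemma bv_T [simp]: "bv b (i, True) = (if b i then 1 else 0)" by (simp add: bv_def)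
lemma bv_F [simp]: "bv b (i, False) = (if b i then 0 else 1)" by (simp add: bv_def)

lemma eval_cong_vars: "vin p V \<Longrightarrow> (\<And>v. v \<in> V \<Longrightarrow> a v = a' v) \<Longrightarrow> eval a p = eval a' p"
  unfolding eval_def vin_def mval_def
  apply (intro sum.cong refl arg_cong2[where f="(*)"] prod.cong)
  apply (metis subsetD)
  done

definition gA :: "nat \<Rightarrow> rpoly" where "gA i = Var (i,True) * Var (i,True) - Var (i,True)"
definition gB :: "nat \<Rightarrow> rpoly" where "gB i = Var (i,True) + Var (i,False) - 1"

lemma eval_gA [simp]: "eval (bv b) (gA i) = 0" by (simp add: gA_def)
lemma eval_gB [simp]: "eval (bv b) (gB i) = 0" by (simp add: gB_def)

definition J :: "nat \<Rightarrow> nat \<Rightarrow> rpoly \<Rightarrow> bool" where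
  "J N D p \<longleftrightarrow> (\<exists>u w. p = (\<Sum>i<N. u i * gA i + w i * gB i) \<and>
      (\<forall>i<N. dle (u i * gA i) D \<and> dle (w i * gB i) D \<and> vin (u i) (twin_vars N) \<and> vin (w i) (twin_vars N)))"

lemma J_eval: "J N D p \<Longrightarrow> eval (bv b) p = 0"
  by (auto simp: J_def)

lemma J_zero: "J N D 0"
  unfolding J_def by (rule exI[of _ "\<lambda>_. 0"], rule exI[of _ "\<lambda>_. 0"]) simp

lemma J_add: assumes "J N D p" "J N D q" shows "J N D (p + q)"
proof -
  obtain u w where p: "p = (\<Sum>i<N. u i * gA i + w i * gB i)"
    "\<forall>i<N. dle (u i * gA i) D \<and> dle (w i * gB i) D \<and> vin (u i) (twin_vars N) \<and> vin (w i) (twin_vars N)"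
    using assms(1) by (auto simp: J_def)
  obtain u' w' where q: "q = (\<Sum>i<N. u' i * gA i + w' i * gB i)"
    "\<forall>i<N. dle (u' i * gA i) D \<and> dle (w' i * gB i) D \<and> vin (u' i) (twin_vars N) \<and> vin (w' i) (twin_vars N)"
    using assms(2) by (auto simp: J_def)
  show ?thesis unfolding J_def
    apply (rule exI[of _ "\<lambda>i. u i + u' i"], rule exI[of _ "\<lambda>i. w i + w' i"])
    using p q by (auto simp: sum.distrib[symmetric] algebra_simps intro: sum.cong dle_add vin_add)
qed

lemma J_mult: assumes "J N D p" "dle r e" "vin r (twin_vars N)" shows "J N (e + D) (r * p)"
proof -
  obtain u w where p: "p = (\<Sum>i<N. u i * gA i + w i * gB i)"
    "\<forall>i<N. dle (u i * gA i) D \<and> dle (w i * gB i) D \<and> vin (u i) (twin_vars N) \<and> vin (w i) (twin_vars N)"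
    using assms(1) by (auto simp: J_def)
  have "r * p = (\<Sum>i<N. (r * u i) * gA i + (r * w i) * gB i)"
    by (simp add: p(1) sum_distrib_left algebra_simps)
  moreover have "\<forall>i<N. dle ((r * u i) * gA i) (e + D) \<and> dle ((r * w i) * gB i) (e + D) \<and>
       vin (r * u i) (twin_vars N) \<and> vin (r * w i) (twin_vars N)"
    using p(2) assms(2,3) by (auto simp: mult.assoc intro: dle_mult vin_mult)
  ultimately show ?thesis unfolding J_def by (intro exI[of _ "\<lambda>i. r * u i"] exI[of _ "\<lambda>i. r * w i"]) simp
qed

lemma J_mono: assumes "J N D p" "D \<le> D'" shows "J N D' p"
proof -
  obtain u w where p: "p = (\<Sum>i<N. u i * gA i + w i * gB i)"
    "\<forall>i<N. dle (u i * gA i) D \<and> dle (w i * gB i) D \<and> vin (u i) (twin_vars N) \<and> vin (w i) (twin_vars N)"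
    using assms(1) by (auto simp: J_def)
  show ?thesis unfolding J_def
    by (rule exI[of _ u], rule exI[of _ w]) (use p assms(2) dle_mono in blast)
qed

lemma J_uminus: "J N D p \<Longrightarrow> J N D (- p)"
proof -
  assume "J N D p"
  then have "J N (0 + D) (sg 0 (-1) * p)" by (intro J_mult) auto
  moreover have "sg 0 (-1) * p = - p" by (simp add: single_uminus)
  ultimately show ?thesis by simp
qed

lemma J_diff: "J N D p \<Longrightarrow> J N D q \<Longrightarrow> J N D (p - q)"
  using J_add[of N D p "-q"] J_uminus by simp

lemma J_sum: "(\<And>x. x \<in> I \<Longrightarrow> J N D (f x)) \<Longrightarrow> J N D (\<Sum>x\<in>I. f x)"
  by (induction I rule: infinite_finite_induct) (auto intro: J_add J_zero)

lemma twin_vars_mono: "N \<le> N' \<Longrightarrow> twin_vars N \<subseteq> twin_vars N'"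
  by (auto simp: twin_vars_def)

lemma J_mono_N: assumes "J N D p" "N \<le> N'" shows "J N' D p"
proof -
  obtain u w where p: "p = (\<Sum>i<N. u i * gA i + w i * gB i)"
    "\<forall>i<N. dle (u i * gA i) D \<and> dle (w i * gB i) D \<and> vin (u i) (twin_vars N) \<and> vin (w i) (twin_vars N)"
    using assms(1) by (auto simp: J_def)
  let ?u = "\<lambda>i. if i < N then u i else 0" and ?w = "\<lambda>i. if i < N then w i else 0"
  have "p = (\<Sum>i<N'. ?u i * gA i + ?w i * gB i)"
  proof -
    have "(\<Sum>i<N'. ?u i * gA i + ?w i * gB i) = (\<Sum>i<N. ?u i * gA i + ?w i * gB i)"
      by (rule sum.mono_neutral_right) (use assms(2) in auto)
    then show ?thesis using p(1) by simp
  qed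
  moreover have "\<forall>i<N'. dle (?u i * gA i) D \<and> dle (?w i * gB i) D \<and> vin (?u i) (twin_vars N') \<and> vin (?w i) (twin_vars N')"
    using p(2) twin_vars_mono[OF assms(2)] by (auto intro: vin_mono)
  ultimately show ?thesis unfolding J_def by (intro exI[of _ ?u] exI[of _ ?w]) simp
qed

lemma dle_Var1 [simp]: "dle (Var v) (Suc 0)" using dle_Var by simp
lemma dle_VV [simp]: "dle (Var v * Var w) 2" using dle_mult[OF dle_Var dle_Var, of v w] by (simp add: numeral_2_eq_2)

lemma Var_twin: "i < N \<Longrightarrow> vin (Var (i, c)) (twin_vars N)"
  by (rule vin_Var) (simp add: twin_vars_def)

lemma J_gA: assumes "i < N" shows "J N 2 (gA i)"
  unfolding J_def
proof (rule exI[of _ "\<lambda>j. if j = i then 1 else 0"], rule exI[of _ "\<lambda>_. 0"], intro conjI)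
  show "gA i = (\<Sum>j<N. (if j = i then 1 else 0) * gA j + 0 * gB j)"
    using assms by (simp add: if_distrib[of "\<lambda>x. x * _"] sum.delta cong: if_cong)
  show "\<forall>j<N. dle ((if j = i then 1 else 0) * gA j) 2 \<and> dle (0 * gB j) 2 \<and>
      vin (if j = i then 1 else 0) (twin_vars N) \<and> vin 0 (twin_vars N)"
    using dle_mult[OF dle_Var dle_Var] by (auto simp: gA_def intro!: dle_diff dle_mono[OF dle_Var])
qed

lemma J_gB: assumes "i < N" shows "J N 1 (gB i)"
  unfolding J_def
proof (rule exI[of _ "\<lambda>_. 0"], rule exI[of _ "\<lambda>j. if j = i then 1 else 0"], intro conjI)
  show "gB i = (\<Sum>j<N. 0 * gA j + (if j = i then 1 else 0) * gB j)"
    using assms by (simp add: if_distrib[of "\<lambda>x. x * _"] sum.delta cong: if_cong)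
  show "\<forall>j<N. dle (0 * gA j) 1 \<and> dle ((if j = i then 1 else 0) * gB j) 1 \<and>
      vin 0 (twin_vars N) \<and> vin (if j = i then 1 else 0) (twin_vars N)"
    by (auto simp: gB_def intro!: dle_diff dle_add dle_Var)
qed

lemma Var_pow: "Var v ^ e = sg (sg v e) 1"
proof (induction e)
  case 0 then show ?case by simp
next
  case (Suc e) then show ?case by (simp add: Var_def mult_single single_add[symmetric])
qed

lemma dle_pow: "dle (Var v ^ e) e"
  by (induction e) (use dle_mult[OF dle_Var] in auto)

lemma vin_pow: "vin (Var v) V \<Longrightarrow> vin (Var v ^ e) V"
  by (induction e) (auto intro: vin_mult)

lemma J_ypow: assumes "i < N" "1 \<le> e" shows "J N e (Var (i,True) ^ e - Var (i,True))"
  using assms(2)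
proof (induction e rule: dec_induct)
  case base then show ?case by (simp add: J_zero)
next
  case (step e)
  let ?y = "Var (i,True)"
  have "?y ^ Suc e - ?y = ?y * (?y ^ e - ?y) + gA i" by (simp add: gA_def algebra_simps)
  moreover have "J N (1 + e) (?y * (?y ^ e - ?y))"
    by (rule J_mult[OF step(3) dle_Var Var_twin[OF assms(1)]])
  moreover have "J N (Suc e) (gA i)" by (rule J_mono[OF J_gA[OF assms(1)]]) (use step(1) in auto)
  ultimately show ?case by (simp add: J_add)
qed

lemma J_ybsq: assumes "i < N" shows "J N 2 (Var (i,False) * Var (i,False) - Var (i,False))"
proof -
  let ?y = "Var (i,True)" and ?z = "Var (i,False)"
  have "?z * ?z - ?z = (?z - ?y) * gB i + gA i" by (simp add: gA_def gB_def algebra_simps)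
  moreover have "J N (1 + 1) ((?z - ?y) * gB i)"
    by (rule J_mult[OF J_gB[OF assms]]) (auto intro!: dle_diff vin_diff Var_twin assms)
  ultimately show ?thesis using J_add[OF _ J_gA[OF assms]] by (simp add: numeral_2_eq_2)
qed

lemma J_zpow: assumes "i < N" "1 \<le> e" shows "J N e (Var (i,False) ^ e - Var (i,False))"
  using assms(2)
proof (induction e rule: dec_induct)
  case base then show ?case by (simp add: J_zero)
next
  case (step e)
  let ?y = "Var (i,False)"
  have eq: "?y ^ Suc e - ?y = ?y * (?y ^ e - ?y) + (?y * ?y - ?y)" by (simp add: algebra_simps)
  have A: "J N (1 + e) (?y * (?y ^ e - ?y))"
    by (rule J_mult[OF step(3) dle_Var Var_twin[OF assms(1)]])
  have B: "J N (Suc e) (?y * ?y - ?y)" by (rule J_mono[OF J_ybsq[OF assms(1)]]) (use step(1) in auto)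
  show ?case by (subst eq, rule J_add) (use A B in simp_all)
qed

lemma J_yz: assumes "i < N" shows "J N 2 (Var (i,True) * Var (i,False))"
proof -
  let ?y = "Var (i,True)" and ?z = "Var (i,False)"
  have "?y * ?z = ?y * gB i - gA i" by (simp add: gA_def gB_def algebra_simps)
  moreover have "J N (1 + 1) (?y * gB i)"
    by (rule J_mult[OF J_gB[OF assms] dle_Var Var_twin[OF assms]])
  ultimately show ?thesis using J_diff[OF _ J_gA[OF assms]] by (simp add: numeral_2_eq_2)
qed

definition strip :: "nat \<Rightarrow> monom \<Rightarrow> monom" where
  "strip i m = Poly_Mapping.update (i,True) 0 (Poly_Mapping.update (i,False) 0 m)"

lemma lk_strip: "lk (strip i m) v = (if v = (i,True) \<or> v = (i,False) then 0 else lk m v)"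
  by (auto simp: strip_def lookup_update)

lemma strip_split: "m = strip i m + sg (i,True) (lk m (i,True)) + sg (i,False) (lk m (i,False))"
  by (rule poly_mapping_eqI) (auto simp: lookup_add lk_strip lookup_single when_def)

lemma keys_strip: "ks (strip i m) \<subseteq> ks m - {(i,True),(i,False)}"
  by (auto simp: in_keys_iff lk_strip split: if_splits)

lemma mono_red:
  assumes "i < N" "ks m \<subseteq> twin_vars N"
  shows "\<exists>a b. J N (monom_deg m) (sg m c - (a + Var (i,True) * b)) \<and> dle a (monom_deg m) \<and>
     dle b (monom_deg m - 1) \<and> (monom_deg m = 0 \<longrightarrow> b = 0) \<and>
     vin a (twin_vars N - {(i,True),(i,False)}) \<and> vin b (twin_vars N - {(i,True),(i,False)})"
proof -
  let ?V = "twin_vars N - {(i,True),(i,False)}"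
  let ?y = "Var (i,True)" and ?z = "Var (i,False)"
  define m' where "m' = strip i m"
  define e1 where "e1 = lk m (i,True)"
  define e2 where "e2 = lk m (i,False)"
  define P where "P = sg m' c"
  have msplit: "m = m' + sg (i,True) e1 + sg (i,False) e2"
    unfolding m'_def e1_def e2_def by (rule strip_split)
  have deg: "monom_deg m = monom_deg m' + e1 + e2"
    by (subst msplit) (simp add: monom_deg_add)
  have Pm: "sg m c = P * (?y ^ e1 * ?z ^ e2)"
    by (subst msplit) (simp add: P_def Var_pow mult_single add.assoc)
  have dP: "dle P (monom_deg m')" by (simp add: P_def dle_def)
  have vP: "vin P ?V" using keys_strip[of i m] assms(2) by (auto simp: P_def vin_def m'_def)
  have vPN: "vin P (twin_vars N)" using vP by (rule vin_mono) auto
  have vy: "vin ?y (twin_vars N)" "vin ?z (twin_vars N)" using assms(1) by (auto intro: Var_twin)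
  consider "e1 = 0" "e2 = 0" | "e1 > 0" "e2 = 0" | "e1 = 0" "e2 > 0" | "e1 > 0" "e2 > 0" by auto
  then show ?thesis
  proof cases
    case 1
    then show ?thesis
      by (intro exI[of _ P] exI[of _ 0]) (use Pm dP vP deg in \<open>auto intro: J_zero\<close>)
  next
    case 2
    have "sg m c - (0 + ?y * P) = P * (?y ^ e1 - ?y)" using 2 Pm by (simp add: algebra_simps)
    moreover have "J N (monom_deg m' + e1) (P * (?y ^ e1 - ?y))"
      by (rule J_mult[OF J_ypow[OF assms(1)] dP vPN]) (use 2 in auto)
    ultimately show ?thesis
      by (intro exI[of _ 0] exI[of _ P]) (use 2 deg dP vP in \<open>auto intro: dle_mono\<close>)
  next
    case 3
    have "sg m c - (P + ?y * (- P)) = P * ((?z ^ e2 - ?z) + gB i)" using 3 Pm by (simp add: gB_def algebra_simps)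
    moreover have "J N (monom_deg m' + e2) (P * ((?z ^ e2 - ?z) + gB i))"
      by (rule J_mult[OF J_add[OF J_zpow[OF assms(1)] J_mono[OF J_gB[OF assms(1)]]] dP vPN]) (use 3 in auto)
    ultimately show ?thesis
      by (intro exI[of _ P] exI[of _ "-P"]) (use 3 deg dP vP in \<open>auto intro: dle_mono\<close>)
  next
    case 4
    have "sg m c - (0 + ?y * 0) = (P * (?y ^ (e1 - 1) * ?z ^ (e2 - 1))) * (?y * ?z)"
      using 4 Pm by (simp add: algebra_simps power_eq_if)
    moreover have "J N (monom_deg m) (P * (?y ^ (e1 - 1) * ?z ^ (e2 - 1)) * (?y * ?z))"
    proof -
      have d: "dle (P * (?y ^ (e1 - 1) * ?z ^ (e2 - 1))) (monom_deg m' + (e1 - 1 + (e2 - 1)))"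
        by (rule dle_mult[OF dP dle_mult[OF dle_pow dle_pow]])
      have v: "vin (P * (?y ^ (e1 - 1) * ?z ^ (e2 - 1))) (twin_vars N)"
        by (intro vin_mult vPN vin_pow vy)
      have eqd: "monom_deg m' + (e1 - 1 + (e2 - 1)) + 2 = monom_deg m" using 4 deg by simp
      show ?thesis using J_mult[OF J_yz[OF assms(1)] d v] unfolding eqd .
    qed
    ultimately show ?thesis
      by (intro exI[of _ 0] exI[of _ 0]) (use 4 deg in \<open>auto simp: add.commute\<close>)
  qed
qed

lemma twin_vars_Suc_minus: "twin_vars (Suc N) - {(N,True),(N,False)} = twin_vars N"
  by (auto simp: twin_vars_def)

lemma poly_red:
  assumes "i < N" "vin p (twin_vars N)" "dle p D"
  shows "\<exists>a b. J N D (p - (a + Var (i,True) * b)) \<and> dle a D \<and> dle b (D - 1) \<and> (D = 0 \<longrightarrow> b = 0) \<and>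
     vin a (twin_vars N - {(i,True),(i,False)}) \<and> vin b (twin_vars N - {(i,True),(i,False)})"
proof -
  let ?V = "twin_vars N - {(i,True),(i,False)}"
  let ?y = "Var (i,True)"
  have "\<forall>m\<in>ks p. \<exists>a b. J N (monom_deg m) (sg m (lk p m) - (a + ?y * b)) \<and> dle a (monom_deg m) \<and>
     dle b (monom_deg m - 1) \<and> (monom_deg m = 0 \<longrightarrow> b = 0) \<and> vin a ?V \<and> vin b ?V"
    using mono_red[OF assms(1)] assms(2) by (auto simp: vin_def)
  then obtain A B where AB: "\<forall>m\<in>ks p. J N (monom_deg m) (sg m (lk p m) - (A m + ?y * B m)) \<and> dle (A m) (monom_deg m) \<and>
     dle (B m) (monom_deg m - 1) \<and> (monom_deg m = 0 \<longrightarrow> B m = 0) \<and> vin (A m) ?V \<and> vin (B m) ?V"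
    by metis
  have degm: "\<forall>m\<in>ks p. monom_deg m \<le> D" using assms(3) by (simp add: dle_def)
  define a where "a = (\<Sum>m\<in>ks p. A m)"
  define b where "b = (\<Sum>m\<in>ks p. B m)"
  have eq: "p - (a + ?y * b) = (\<Sum>m\<in>ks p. sg m (lk p m) - (A m + ?y * B m))"
    by (subst (1) poly_expand[of p]) (simp add: a_def b_def sum_distrib_left sum.distrib sum_subtractf)
  have "J N D (p - (a + ?y * b))"
    unfolding eq by (rule J_sum) (use AB degm in \<open>auto intro: J_mono\<close>)
  moreover have "dle a D" unfolding a_def by (rule dle_sum) (use AB degm in \<open>auto intro: dle_mono\<close>)
  moreover have "dle b (D - 1)" unfolding b_def by (rule dle_sum) (use AB degm in \<open>auto intro: dle_mono[OF _ diff_le_mono]\<close>)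
  moreover have "D = 0 \<longrightarrow> b = 0" unfolding b_def using AB degm by auto
  moreover have "vin a ?V" unfolding a_def by (rule vin_sum) (use AB in auto)
  moreover have "vin b ?V" unfolding b_def by (rule vin_sum) (use AB in auto)
  ultimately show ?thesis by blast
qed

lemma ideal_complete: "vin p (twin_vars N) \<Longrightarrow> dle p D \<Longrightarrow> (\<forall>b. eval (bv b) p = 0) \<Longrightarrow> J N D p"
proof (induction N arbitrary: p D)
  case 0
  have k: "ks p \<subseteq> {0}"
  proof
    fix m assume "m \<in> ks p"
    then have "ks m = {}" using 0(1) by (auto simp: vin_def twin_vars_def)
    then show "m \<in> {0}" by simp
  qed
  have "eval (bv undefined) p = lk p 0" using eval_superset[OF _ k] by simp
  then have "lk p 0 = 0" using 0(3) by simp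
  then have "p = 0" using k by (intro poly_mapping_eqI) (metis in_keys_iff lookup_zero singletonD subsetD)
  then show ?case by (simp add: J_zero)
next
  case (Suc N)
  let ?y = "Var (N,True)"
  obtain a b where ab: "J (Suc N) D (p - (a + ?y * b))" "dle a D" "dle b (D - 1)" "D = 0 \<longrightarrow> b = 0"
    "vin a (twin_vars N)" "vin b (twin_vars N)"
    using poly_red[of N "Suc N" p D] Suc.prems twin_vars_Suc_minus by auto
  have agree: "\<And>b0 c v. v \<in> twin_vars N \<Longrightarrow> bv (b0(N := c)) v = bv b0 v"
    by (auto simp: bv_def twin_vars_def)
  have key: "eval (bv b0) p = eval (bv b0) a + eval (bv b0) ?y * eval (bv b0) b" for b0
    using J_eval[OF ab(1), of b0] by simp
  have a0: "\<forall>b0. eval (bv b0) a = 0"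
  proof
    fix b0
    have "eval (bv (b0(N := False))) a = 0" using key[of "b0(N := False)"] Suc.prems(3) by simp
    moreover have "eval (bv (b0(N := False))) a = eval (bv b0) a"
      by (rule eval_cong_vars[OF ab(5)]) (rule agree)
    ultimately show "eval (bv b0) a = 0" by simp
  qed
  have b0: "\<forall>b0. eval (bv b0) b = 0"
  proof
    fix b0
    have "eval (bv (b0(N := True))) a + eval (bv (b0(N := True))) b = 0"
      using key[of "b0(N := True)"] Suc.prems(3) by simp
    moreover have "eval (bv (b0(N := True))) a = eval (bv b0) a"
      by (rule eval_cong_vars[OF ab(5)]) (rule agree)
    moreover have "eval (bv (b0(N := True))) b = eval (bv b0) b"
      by (rule eval_cong_vars[OF ab(6)]) (rule agree)
    ultimately show "eval (bv b0) b = 0" using a0 by simp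
  qed
  have Ja: "J (Suc N) D a" using Suc.IH[OF ab(5) ab(2) a0] by (rule J_mono_N) simp
  have Jb: "J (Suc N) D (?y * b)"
  proof (cases "D = 0")
    case True then show ?thesis using ab(4) by (simp add: J_zero)
  next
    case False
    have "J (Suc N) (D - 1) b" using Suc.IH[OF ab(6) ab(3) b0] by (rule J_mono_N) simp
    from J_mult[OF this dle_Var Var_twin[of N "Suc N"]] False show ?thesis by simp
  qed
  have "p = (p - (a + ?y * b)) + (a + ?y * b)" by simp
  then show ?case using J_add[OF ab(1) J_add[OF Ja Jb]] by metis
qed

definition msub :: "(var \<Rightarrow> rpoly) \<Rightarrow> rpoly \<Rightarrow> rpoly" where
  "msub f p = (\<Sum>m\<in>ks p. sg 0 (lk p m) * (\<Prod>v\<in>ks m. f v))"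

lemma eval_msub: "eval a (msub f p) = (\<Sum>m\<in>ks p. lk p m * (\<Prod>v\<in>ks m. eval a (f v)))"
  by (simp add: msub_def)

lemma mval_bool: "mval (bv b) m = (\<Prod>v\<in>ks m. bv b v)"
  unfolding mval_def
proof (rule prod.cong[OF refl])
  fix v assume "v \<in> ks m"
  then have "lk m v \<noteq> 0" by (simp add: in_keys_iff)
  then show "bv b v ^ lk m v = bv b v" using bv_01[of b v] by (auto simp: zero_power)
qed

lemma eval_bool: "eval (bv b) p = (\<Sum>m\<in>ks p. lk p m * (\<Prod>v\<in>ks m. bv b v))"
  by (simp add: eval_def mval_bool)

lemma msub_bool: "(\<And>v. eval (bv b) (f v) = bv b' v) \<Longrightarrow> eval (bv b) (msub f p) = eval (bv b') p"
  by (simp add: eval_msub eval_bool)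

lemma vin_msub: "(\<And>v. vin (f v) V) \<Longrightarrow> vin (msub f p) V"
  unfolding msub_def by (intro vin_sum vin_mult vin_const vin_prod) auto

lemma dle_scal: "dle p d \<Longrightarrow> dle (sg 0 c * p) d"
  using dle_mult[of "sg 0 c" 0 p d] by simp

lemma dle_msub_gen: "(\<And>m. m \<in> ks p \<Longrightarrow> dle (\<Prod>v\<in>ks m. f v) d) \<Longrightarrow> dle (msub f p) d"
  unfolding msub_def by (intro dle_sum dle_scal) auto

lemma dle_prod_gen: assumes "finite S" "\<And>v. v \<in> S \<Longrightarrow> dle (f v) (g v)"
  shows "dle (\<Prod>v\<in>S. f v) (\<Sum>v\<in>S. g v)"
  using assms proof (induction S rule: finite_induct)
  case (insert x F)
  then show ?case using dle_mult[of "f x" "g x" "prod f F" "sum g F"] by simp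
qed simp

lemma card_keys_le_deg: "card (ks m) \<le> monom_deg m"
proof -
  have "card (ks m) = (\<Sum>v\<in>ks m. 1)" by simp
  also have "\<dots> \<le> (\<Sum>v\<in>ks m. lk m v)" by (rule sum_mono) (auto simp: in_keys_iff)
  finally show ?thesis by (simp add: monom_deg_def)
qed

lemma dle_msub: assumes "\<And>v. dle (f v) 1" "dle p d" shows "dle (msub f p) d"
proof (rule dle_msub_gen)
  fix m assume m: "m \<in> ks p"
  have "dle (\<Prod>v\<in>ks m. f v) (card (ks m))" by (rule dle_prod) (use assms(1) in auto)
  then show "dle (\<Prod>v\<in>ks m. f v) d"
    by (rule dle_mono) (use card_keys_le_deg[of m] assms(2) m in \<open>auto simp: dle_def\<close>)
qed

lemma msub_cancel:
  assumes "\<And>v. v \<noteq> (i,True) \<Longrightarrow> v \<noteq> (i,False) \<Longrightarrow> f1 v = f0 v"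
    and "\<And>v. dle (f0 v) 1" "\<And>v. dle (f1 v) 1"
    and "dle (f0 (i,True)) 0" "dle (f0 (i,False)) 0" "dle (f1 (i,True)) 0" "dle (f1 (i,False)) 0"
    and "dle q D"
  shows "dle (msub f1 q - msub f0 q) (D - 1)"
proof -
  have eq: "msub f1 q - msub f0 q = (\<Sum>m\<in>ks q. sg 0 (lk q m) * ((\<Prod>v\<in>ks m. f1 v) - (\<Prod>v\<in>ks m. f0 v)))"
    by (simp add: msub_def sum_subtractf algebra_simps)
  have *: "dle ((\<Prod>v\<in>ks m. f1 v) - (\<Prod>v\<in>ks m. f0 v)) (D - 1)" if m: "m \<in> ks q" for m
  proof (cases "(i,True) \<in> ks m \<or> (i,False) \<in> ks m")
    case False
    then have "(\<Prod>v\<in>ks m. f1 v) = (\<Prod>v\<in>ks m. f0 v)" by (intro prod.cong refl assms(1)) auto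
    then show ?thesis by simp
  next
    case True
    then obtain v0 where v0: "v0 \<in> ks m" "v0 = (i,True) \<or> v0 = (i,False)" by auto
    have degm: "card (ks m) \<le> D" using card_keys_le_deg[of m] assms(8) m by (auto simp: dle_def)
    have bound: "dle (\<Prod>v\<in>ks m. f v) (D - 1)" if f: "\<And>v. dle (f v) 1" "dle (f v0) 0" for f
    proof -
      have "dle (\<Prod>v\<in>ks m. f v) (\<Sum>v\<in>ks m. if v = v0 then 0 else 1)"
        by (rule dle_prod_gen) (use f in auto)
      moreover have "(\<Sum>v\<in>ks m. if v = v0 then 0 else 1::nat) = card (ks m) - 1"
        using v0(1) by (simp add: sum.If_cases Int_absorb1 Diff_eq[symmetric] card_Diff_singleton)
      ultimately show ?thesis using degm by (auto intro: dle_mono)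
    qed
    have "dle (\<Prod>v\<in>ks m. f1 v) (D - 1)" by (rule bound) (use assms v0(2) in auto)
    moreover have "dle (\<Prod>v\<in>ks m. f0 v) (D - 1)" by (rule bound) (use assms v0(2) in auto)
    ultimately show ?thesis by (rule dle_diff)
  qed
  show ?thesis unfolding eq by (intro dle_sum dle_scal *)
qed

locale sos_setting =
  fixes n k :: nat and Q :: "rpoly list"
  assumes Qok: "\<forall>q\<in>set Q. dle q k \<and> vin q (twin_vars n)"
begin

definition Cub :: "var set \<Rightarrow> (nat \<Rightarrow> bool) set" where "Cub \<rho> = {b. \<forall>l\<in>\<rho>. bv b l = 0}"

definition Kc :: "var set \<Rightarrow> nat \<Rightarrow> nat \<Rightarrow> ((nat \<Rightarrow> bool) \<Rightarrow> real) \<Rightarrow> bool" where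
"Kc \<rho> e c h \<longleftrightarrow> (\<exists>rs ts. length ts = length Q \<and> (\<forall>r\<in>set rs. dle r e \<and> vin r (twin_vars n)) \<and>
   (\<forall>t\<in>set ts. dle t (c - k) \<and> vin t (twin_vars n)) \<and>
   (\<forall>b\<in>Cub \<rho>. h b = (\<Sum>r\<leftarrow>rs. eval (bv b) r ^ 2) + (\<Sum>j<length Q. eval (bv b) (ts!j) * eval (bv b) (Q!j))))"

lemma KcI:
  assumes "length ts = length Q" "\<And>r. r\<in>set rs \<Longrightarrow> dle r e \<and> vin r (twin_vars n)"
   "\<And>t. t\<in>set ts \<Longrightarrow> dle t (c - k) \<and> vin t (twin_vars n)"
   "\<And>b. b\<in>Cub \<rho> \<Longrightarrow> h b = (\<Sum>r\<leftarrow>rs. eval (bv b) r ^ 2) + (\<Sum>j<length Q. eval (bv b) (ts!j) * eval (bv b) (Q!j))"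
  shows "Kc \<rho> e c h"
  unfolding Kc_def using assms by blast

lemma K_cong: assumes "Kc \<rho> e c h" "\<And>b. b \<in> Cub \<rho> \<Longrightarrow> h b = h' b" shows "Kc \<rho> e c h'"
proof -
  obtain rs ts where 1: "length ts = length Q" "\<forall>r\<in>set rs. dle r e \<and> vin r (twin_vars n)"
   "\<forall>t\<in>set ts. dle t (c - k) \<and> vin t (twin_vars n)"
   "\<forall>b\<in>Cub \<rho>. h b = (\<Sum>r\<leftarrow>rs. eval (bv b) r ^ 2) + (\<Sum>j<length Q. eval (bv b) (ts!j) * eval (bv b) (Q!j))"
    using assms(1) unfolding Kc_def by blast
  show ?thesis by (rule KcI[where rs=rs and ts=ts]) (use 1 assms(2) in auto)
qed

lemma K_sub: "Kc \<rho> e c h \<Longrightarrow> Cub \<rho>' \<subseteq> Cub \<rho> \<Longrightarrow> Kc \<rho>' e c h"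
  unfolding Kc_def by blast

lemma K_mono: assumes "Kc \<rho> e c h" "e \<le> e'" "c \<le> c'" shows "Kc \<rho> e' c' h"
proof -
  obtain rs ts where 1: "length ts = length Q" "\<forall>r\<in>set rs. dle r e \<and> vin r (twin_vars n)"
   "\<forall>t\<in>set ts. dle t (c - k) \<and> vin t (twin_vars n)"
   "\<forall>b\<in>Cub \<rho>. h b = (\<Sum>r\<leftarrow>rs. eval (bv b) r ^ 2) + (\<Sum>j<length Q. eval (bv b) (ts!j) * eval (bv b) (Q!j))"
    using assms(1) unfolding Kc_def by blast
  have "c - k \<le> c' - k" using assms(3) by simp
  show ?thesis by (rule KcI[where rs=rs and ts=ts]) (use 1 assms(2) \<open>c - k \<le> c' - k\<close> dle_mono in auto)
qed

lemma K_add: assumes "Kc \<rho> e c h1" "Kc \<rho> e c h2" shows "Kc \<rho> e c (\<lambda>b. h1 b + h2 b)"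
proof -
  obtain rs1 ts1 where 1: "length ts1 = length Q" "\<forall>r\<in>set rs1. dle r e \<and> vin r (twin_vars n)"
   "\<forall>t\<in>set ts1. dle t (c - k) \<and> vin t (twin_vars n)"
   "\<forall>b\<in>Cub \<rho>. h1 b = (\<Sum>r\<leftarrow>rs1. eval (bv b) r ^ 2) + (\<Sum>j<length Q. eval (bv b) (ts1!j) * eval (bv b) (Q!j))"
    using assms(1) unfolding Kc_def by blast
  obtain rs2 ts2 where 2: "length ts2 = length Q" "\<forall>r\<in>set rs2. dle r e \<and> vin r (twin_vars n)"
   "\<forall>t\<in>set ts2. dle t (c - k) \<and> vin t (twin_vars n)"
   "\<forall>b\<in>Cub \<rho>. h2 b = (\<Sum>r\<leftarrow>rs2. eval (bv b) r ^ 2) + (\<Sum>j<length Q. eval (bv b) (ts2!j) * eval (bv b) (Q!j))"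
    using assms(2) unfolding Kc_def by blast
  show ?thesis
  proof (rule KcI[where rs="rs1 @ rs2" and ts="map (\<lambda>j. ts1!j + ts2!j) [0..<length Q]"])
    fix t assume "t \<in> set (map (\<lambda>j. ts1!j + ts2!j) [0..<length Q])"
    then obtain j where j: "j < length Q" "t = ts1!j + ts2!j" by auto
    then have "ts1!j \<in> set ts1" "ts2!j \<in> set ts2" using 1(1) 2(1) by auto
    then show "dle t (c - k) \<and> vin t (twin_vars n)" using 1(3) 2(3) j(2) by (auto intro: dle_add vin_add)
  next
    fix b assume b: "b \<in> Cub \<rho>"
    have "(\<Sum>j<length Q. eval (bv b) (map (\<lambda>j. ts1!j + ts2!j) [0..<length Q] ! j) * eval (bv b) (Q!j))
      = (\<Sum>j<length Q. eval (bv b) (ts1!j) * eval (bv b) (Q!j)) + (\<Sum>j<length Q. eval (bv b) (ts2!j) * eval (bv b) (Q!j))"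
      by (simp add: sum.distrib[symmetric] algebra_simps)
    then show "h1 b + h2 b = (\<Sum>r\<leftarrow>rs1 @ rs2. eval (bv b) r ^ 2) +
      (\<Sum>j<length Q. eval (bv b) (map (\<lambda>j. ts1!j + ts2!j) [0..<length Q] ! j) * eval (bv b) (Q!j))"
      using 1(4) 2(4) b by simp
  qed (use 1 2 in auto)
qed

lemma K_zero: "Kc \<rho> e c (\<lambda>_. 0)"
  by (rule KcI[where rs="[]" and ts="replicate (length Q) 0"]) auto

lemma K_sum: "finite I \<Longrightarrow> (\<And>x. x \<in> I \<Longrightarrow> Kc \<rho> e c (f x)) \<Longrightarrow> Kc \<rho> e c (\<lambda>b. \<Sum>x\<in>I. f x b)"
proof (induction I rule: finite_induct)
  case empty then show ?case by (simp add: K_zero)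
next
  case (insert x F) then show ?case using K_add[of \<rho> e c "f x" "\<lambda>b. \<Sum>x\<in>F. f x b"] by simp
qed

lemma K_scale: assumes "Kc \<rho> e c h" "0 \<le> a" shows "Kc \<rho> e c (\<lambda>b. a * h b)"
proof -
  obtain rs ts where 1: "length ts = length Q" "\<forall>r\<in>set rs. dle r e \<and> vin r (twin_vars n)"
   "\<forall>t\<in>set ts. dle t (c - k) \<and> vin t (twin_vars n)"
   "\<forall>b\<in>Cub \<rho>. h b = (\<Sum>r\<leftarrow>rs. eval (bv b) r ^ 2) + (\<Sum>j<length Q. eval (bv b) (ts!j) * eval (bv b) (Q!j))"
    using assms(1) unfolding Kc_def by blast
  show ?thesis
  proof (rule KcI[where rs="map (\<lambda>r. sg 0 (sqrt a) * r) rs" and ts="map (\<lambda>t. sg 0 a * t) ts"])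
    fix b assume b: "b \<in> Cub \<rho>"
    have "(\<Sum>r\<leftarrow>map (\<lambda>r. sg 0 (sqrt a) * r) rs. eval (bv b) r ^ 2) = a * (\<Sum>r\<leftarrow>rs. eval (bv b) r ^ 2)"
      using assms(2) by (induction rs) (auto simp: power_mult_distrib algebra_simps)
    moreover have "(\<Sum>j<length Q. eval (bv b) (map (\<lambda>t. sg 0 a * t) ts ! j) * eval (bv b) (Q!j))
      = a * (\<Sum>j<length Q. eval (bv b) (ts!j) * eval (bv b) (Q!j))"
      using 1(1) by (simp add: sum_distrib_left algebra_simps)
    ultimately show "a * h b = (\<Sum>r\<leftarrow>map (\<lambda>r. sg 0 (sqrt a) * r) rs. eval (bv b) r ^ 2) +
      (\<Sum>j<length Q. eval (bv b) (map (\<lambda>t. sg 0 a * t) ts ! j) * eval (bv b) (Q!j))"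
      using 1(4) b by (simp add: algebra_simps)
  qed (use 1 in \<open>auto intro: dle_scal vin_mult\<close>)
qed

lemma K_sq: "dle r e \<Longrightarrow> vin r (twin_vars n) \<Longrightarrow> Kc \<rho> e c (\<lambda>b. eval (bv b) r ^ 2)"
  by (rule KcI[where rs="[r]" and ts="replicate (length Q) 0"]) auto

lemma K_tq: assumes "j < length Q" "dle t (c - k)" "vin t (twin_vars n)"
  shows "Kc \<rho> e c (\<lambda>b. eval (bv b) t * eval (bv b) (Q!j))"
proof (rule KcI[where rs="[]" and ts="map (\<lambda>j'. if j' = j then t else 0) [0..<length Q]"])
  fix b
  have "(\<Sum>j'<length Q. eval (bv b) (map (\<lambda>j'. if j' = j then t else 0) [0..<length Q] ! j') * eval (bv b) (Q!j'))
     = (\<Sum>j'<length Q. if j' = j then eval (bv b) t * eval (bv b) (Q!j) else 0)"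
    by (intro sum.cong) auto
  also have "\<dots> = eval (bv b) t * eval (bv b) (Q!j)" using assms(1) by simp
  finally show "eval (bv b) t * eval (bv b) (Q!j) = (\<Sum>r\<leftarrow>[]. eval (bv b) r ^ 2) +
     (\<Sum>j'<length Q. eval (bv b) (map (\<lambda>j'. if j' = j then t else 0) [0..<length Q] ! j') * eval (bv b) (Q!j'))"
    by simp
qed (use assms in auto)

lemma K_const: "0 \<le> x \<Longrightarrow> Kc \<rho> e c (\<lambda>_. x)"
  using K_sq[of "sg 0 (sqrt x)" e \<rho> c] by simp

definition P :: "var set \<Rightarrow> nat \<Rightarrow> nat \<Rightarrow> bool" where "P \<rho> e c \<longleftrightarrow> Kc \<rho> e c (\<lambda>_. -1)"

end

lemma dle_Var_mult: "dle p d \<Longrightarrow> dle (Var v * p) (Suc d)"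
  using dle_mult[OF dle_Var, of p d v] by simp

definition tw :: "var \<Rightarrow> var" where "tw v = (fst v, \<not> snd v)"

lemma bv_tw: "bv b (tw l) = 1 - bv b l" by (simp add: bv_def tw_def)

definition mlp :: "var set \<Rightarrow> rpoly" where "mlp S = (\<Prod>v\<in>S. Var v)"

lemma eval_mlp: "eval (bv b) (mlp S) = (\<Prod>v\<in>S. bv b v)" by (simp add: mlp_def)

lemma prod_bv_01: "(\<Prod>v\<in>S. bv b v) = 0 \<or> (\<Prod>v\<in>S. bv b v) = 1"
proof (induction S rule: infinite_finite_induct)
  case (insert x F) then show ?case using bv_01[of b x] by auto
qed auto

lemma dle_mlp: "finite S \<Longrightarrow> dle (mlp S) (card S)"
  unfolding mlp_def by (rule dle_prod) (auto simp: dle_Var)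

lemma vin_mlp: "S \<subseteq> V \<Longrightarrow> vin (mlp S) V"
  unfolding mlp_def by (intro vin_prod vin_Var) auto

lemma tw_twin: "l \<in> twin_vars n \<Longrightarrow> tw l \<in> twin_vars n" by (auto simp: tw_def twin_vars_def)

context sos_setting begin

lemma K_neg_lit:
  assumes "P (insert l \<rho>) e c" "k \<le> c" "l \<in> twin_vars n"
  shows "Kc \<rho> (e+1) (c+1) (\<lambda>b. - bv b (tw l))"
proof -
  obtain rs ts where 1: "length ts = length Q" "\<forall>r\<in>set rs. dle r e \<and> vin r (twin_vars n)"
   "\<forall>t\<in>set ts. dle t (c - k) \<and> vin t (twin_vars n)"
   "\<forall>b\<in>Cub (insert l \<rho>). -1 = (\<Sum>r\<leftarrow>rs. eval (bv b) r ^ 2) + (\<Sum>j<length Q. eval (bv b) (ts!j) * eval (bv b) (Q!j))"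
    using assms(1) unfolding Kc_def P_def by blast
  let ?L = "Var (tw l)"
  have vL: "vin ?L (twin_vars n)" by (rule vin_Var) (rule tw_twin[OF assms(3)])
  show ?thesis
  proof (rule KcI[where rs="map (\<lambda>r. ?L * r) rs" and ts="map (\<lambda>t. ?L * t) ts"])
    fix r assume "r \<in> set (map (\<lambda>r. ?L * r) rs)"
    then show "dle r (e + 1) \<and> vin r (twin_vars n)" using 1(2) vL
      by (auto intro: vin_mult dle_Var_mult)
  next
    fix t assume "t \<in> set (map (\<lambda>t. ?L * t) ts)"
    moreover have "Suc (c - k) = c + 1 - k" using assms(2) by simp
    ultimately show "dle t (c + 1 - k) \<and> vin t (twin_vars n)" using 1(3) vL
      by (auto intro: vin_mult) (metis dle_Var_mult)
  next
    fix b assume b: "b \<in> Cub \<rho>"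
    let ?x = "bv b (tw l)"
    have elem: "(?x * eval (bv b) r) ^ 2 = ?x * eval (bv b) r ^ 2" for r
      using bv_01[of b "tw l"] by (auto simp: power2_eq_square)
    have sq: "(\<Sum>r\<leftarrow>map (\<lambda>r. ?L * r) rs. eval (bv b) r ^ 2) = ?x * (\<Sum>r\<leftarrow>rs. eval (bv b) r ^ 2)"
    proof (induction rs)
      case (Cons a rs) then show ?case by (simp add: elem distrib_left)
    qed simp
    have tq: "(\<Sum>j<length Q. eval (bv b) (map (\<lambda>t. ?L * t) ts ! j) * eval (bv b) (Q!j))
       = ?x * (\<Sum>j<length Q. eval (bv b) (ts!j) * eval (bv b) (Q!j))"
      using 1(1) by (simp add: sum_distrib_left algebra_simps)
    show "- ?x = (\<Sum>r\<leftarrow>map (\<lambda>r. ?L * r) rs. eval (bv b) r ^ 2) +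
       (\<Sum>j<length Q. eval (bv b) (map (\<lambda>t. ?L * t) ts ! j) * eval (bv b) (Q!j))"
    proof (cases "?x = 0")
      case True then show ?thesis unfolding sq tq by simp
    next
      case False
      then have "?x = 1" using bv_01 by metis
      then have "b \<in> Cub (insert l \<rho>)" using b bv_tw[of b l] by (auto simp: Cub_def)
      then show ?thesis unfolding sq tq using 1(4) \<open>?x = 1\<close> by simp
    qed
  qed (use 1 in simp)
qed

end

lemma bv01_cases: "x = 0 \<or> x = (1::real) \<Longrightarrow> (x = 0 \<Longrightarrow> R) \<Longrightarrow> (x = 1 \<Longrightarrow> R) \<Longrightarrow> R" by auto

context sos_setting begin

lemma K_lit_m1:
  assumes "Kc \<rho> E C (\<lambda>b. - bv b (tw l))" "finite S1" "card S1 + 1 \<le> E" "S1 \<subseteq> twin_vars n" "l \<in> twin_vars n"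
  shows "Kc \<rho> E C (\<lambda>b. - (bv b (tw l) * (\<Prod>v\<in>S1. bv b v)))"
proof -
  let ?A = "Var (tw l) * (1 - mlp S1)"
  have dA: "dle ?A E"
    by (rule dle_mono[OF dle_Var_mult[OF dle_diff[OF dle_one dle_mlp[OF assms(2)]]]]) (use assms(3) in simp)
  have vA: "vin ?A (twin_vars n)"
    by (intro vin_mult vin_diff vin_one vin_mlp vin_Var tw_twin assms(4,5))
  have "Kc \<rho> E C (\<lambda>b. - bv b (tw l) + eval (bv b) ?A ^ 2)" by (rule K_add[OF assms(1) K_sq[OF dA vA]])
  then show ?thesis
  proof (rule K_cong)
    fix b
    show "- bv b (tw l) + eval (bv b) ?A ^ 2 = - (bv b (tw l) * (\<Prod>v\<in>S1. bv b v))"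
      unfolding eval_mult eval_diff eval_one eval_mlp eval_Var
      by (rule bv01_cases[OF bv_01[of b "tw l"]]; rule bv01_cases[OF prod_bv_01[of b S1]])
        (simp_all add: power2_eq_square)
  qed
qed

lemma K_pm:
  assumes K: "Kc \<rho> E C (\<lambda>b. - bv b (tw l))" and fin: "finite S" and cS: "card S + 1 \<le> 2*E"
    and Sn: "S \<subseteq> twin_vars n" and ln: "l \<in> twin_vars n" and s: "s = 1 \<or> s = -1" and tau: "\<tau> > 0"
  shows "Kc \<rho> E C (\<lambda>b. s * bv b (tw l) * (\<Prod>v\<in>S. bv b v) + \<tau>)"
proof -
  obtain S1 where S1: "S1 \<subseteq> S" "card S1 = min (card S) (E - 1)" "finite S1"
    using obtain_subset_with_card_n[of "min (card S) (E - 1)" S] by auto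
  define S2 where "S2 = S - S1"
  have cS2: "card S2 \<le> E" using cS S1 fin by (simp add: S2_def card_Diff_subset)
  have cS1: "card S1 + 1 \<le> E" using S1(2) cS by auto
  have fS2: "finite S2" using fin by (simp add: S2_def)
  have SS: "S = S1 \<union> S2" "S1 \<inter> S2 = {}" using S1(1) by (auto simp: S2_def)
  define \<sigma> where "\<sigma> = s * (2 * \<tau>)"
  let ?A = "Var (tw l) * mlp S1 + sg 0 \<sigma> * mlp S2"
  let ?B = "sg 0 \<sigma> * (1 - mlp S2)"
  have dA: "dle ?A E"
    by (intro dle_add dle_mono[OF dle_Var_mult[OF dle_mlp[OF S1(3)]]] dle_mono[OF dle_scal[OF dle_mlp[OF fS2]]])
      (use cS1 cS2 in auto)
  have dB: "dle ?B E" by (intro dle_scal dle_mono[OF dle_diff[OF dle_one dle_mlp[OF fS2]]] cS2)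
  have S2n: "S2 \<subseteq> twin_vars n" using Sn by (auto simp: S2_def)
  have vA: "vin ?A (twin_vars n)"
    by (intro vin_add vin_mult vin_mlp vin_Var tw_twin ln vin_const S2n) (use S1(1) Sn in auto)
  have vB: "vin ?B (twin_vars n)" by (intro vin_mult vin_const vin_diff vin_one vin_mlp S2n)
  have K1: "Kc \<rho> E C (\<lambda>b. - (bv b (tw l) * (\<Prod>v\<in>S1. bv b v)))"
    by (rule K_lit_m1[OF K S1(3) cS1 _ ln]) (use S1(1) Sn in auto)
  have "Kc \<rho> E C (\<lambda>b. eval (bv b) ?A ^ 2 + eval (bv b) ?B ^ 2 + - (bv b (tw l) * (\<Prod>v\<in>S1. bv b v)))"
    by (intro K_add K_sq dA dB vA vB K1)
  then have "Kc \<rho> E C (\<lambda>b. (1 / (4 * \<tau>)) * (eval (bv b) ?A ^ 2 + eval (bv b) ?B ^ 2 + - (bv b (tw l) * (\<Prod>v\<in>S1. bv b v))))"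
    by (rule K_scale) (use tau in simp)
  then show ?thesis
  proof (rule K_cong)
    fix b
    have split: "(\<Prod>v\<in>S. bv b v) = (\<Prod>v\<in>S1. bv b v) * (\<Prod>v\<in>S2. bv b v)"
      unfolding SS(1) by (rule prod.union_disjoint[OF S1(3) fS2 SS(2)])
    have s2: "s * s = 1" using s by auto
    show "(1 / (4 * \<tau>)) * (eval (bv b) ?A ^ 2 + eval (bv b) ?B ^ 2 + - (bv b (tw l) * (\<Prod>v\<in>S1. bv b v)))
        = s * bv b (tw l) * (\<Prod>v\<in>S. bv b v) + \<tau>"
      unfolding split eval_mult eval_add eval_diff eval_one eval_mlp eval_Var eval_const \<sigma>_def
      using bv_01[of b "tw l"] prod_bv_01[of b S1] prod_bv_01[of b S2] tau s
      by (auto simp: power2_eq_square field_simps)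
  qed
qed

end

context sos_setting begin

lemma K_poly_pm:
  assumes K: "Kc \<rho> E C (\<lambda>b. - bv b (tw l))" and dH: "dle H (2*E - 1)" and vH: "vin H (twin_vars n)"
    and ln: "l \<in> twin_vars n" and s: "s = 1 \<or> s = -1" and eps: "\<epsilon> > 0" and E1: "E \<ge> 1"
  shows "Kc \<rho> E C (\<lambda>b. s * bv b (tw l) * eval (bv b) H + \<epsilon>)"
proof -
  define SA where "SA = (\<Sum>m\<in>ks H. \<bar>lk H m\<bar>)"
  define \<delta> where "\<delta> = \<epsilon> / (1 + SA)"
  have SA0: "SA \<ge> 0" unfolding SA_def by (simp add: sum_nonneg)
  have d0: "\<delta> > 0" unfolding \<delta>_def using SA0 eps by simp
  have Km: "Kc \<rho> E C (\<lambda>b. s * bv b (tw l) * (lk H m * (\<Prod>v\<in>ks m. bv b v)) + \<bar>lk H m\<bar> * \<delta>)"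
    if m: "m \<in> ks H" for m
  proof -
    have cm: "card (ks m) + 1 \<le> 2 * E" using card_keys_le_deg[of m] dH m E1 by (auto simp: dle_def)
    have mn: "ks m \<subseteq> twin_vars n" using vH m by (auto simp: vin_def)
    show ?thesis
    proof (cases "lk H m \<ge> 0")
      case True
      have "Kc \<rho> E C (\<lambda>b. lk H m * (s * bv b (tw l) * (\<Prod>v\<in>ks m. bv b v) + \<delta>))"
        by (rule K_scale[OF K_pm[OF K _ cm mn ln s d0] True]) simp
      then show ?thesis by (rule K_cong) (use True in \<open>simp add: algebra_simps\<close>)
    next
      case False
      have s': "- s = 1 \<or> - s = -1" using s by auto
      have "Kc \<rho> E C (\<lambda>b. (- lk H m) * ((- s) * bv b (tw l) * (\<Prod>v\<in>ks m. bv b v) + \<delta>))"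
        by (rule K_scale[OF K_pm[OF K _ cm mn ln s' d0]]) (use False in simp_all)
      then show ?thesis by (rule K_cong) (use False in \<open>simp add: algebra_simps\<close>)
    qed
  qed
  have "Kc \<rho> E C (\<lambda>b. \<Sum>m\<in>ks H. s * bv b (tw l) * (lk H m * (\<Prod>v\<in>ks m. bv b v)) + \<bar>lk H m\<bar> * \<delta>)"
    by (rule K_sum) (use Km in auto)
  moreover have "Kc \<rho> E C (\<lambda>_. \<epsilon> - SA * \<delta>)"
  proof (rule K_const)
    have "SA * \<delta> = \<epsilon> * (SA / (1 + SA))" unfolding \<delta>_def by simp
    also have "\<dots> \<le> \<epsilon> * 1" using SA0 eps by (intro mult_left_mono) auto
    finally show "0 \<le> \<epsilon> - SA * \<delta>" by simp
  qed
  ultimately have "Kc \<rho> E C (\<lambda>b. (\<Sum>m\<in>ks H. s * bv b (tw l) * (lk H m * (\<Prod>v\<in>ks m. bv b v)) + \<bar>lk H m\<bar> * \<delta>) + (\<epsilon> - SA * \<delta>))"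
    by (rule K_add)
  then show ?thesis
  proof (rule K_cong)
    fix b
    show "(\<Sum>m\<in>ks H. s * bv b (tw l) * (lk H m * (\<Prod>v\<in>ks m. bv b v)) + \<bar>lk H m\<bar> * \<delta>) + (\<epsilon> - SA * \<delta>)
      = s * bv b (tw l) * eval (bv b) H + \<epsilon>"
      unfolding eval_bool SA_def by (simp add: sum.distrib sum_distrib_left sum_distrib_right)
  qed
qed

end

lemma vin_msub2: assumes "vin p W" "\<And>v. v \<in> W \<Longrightarrow> vin (f v) V" shows "vin (msub f p) V"
  unfolding msub_def
proof (intro vin_sum vin_mult vin_const vin_prod)
  fix m v assume "m \<in> ks p" "v \<in> ks m"
  then have "v \<in> W" using assms(1) by (auto simp: vin_def)
  then show "vin (f v) V" using assms(2) by blast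
qed

lemma msub_cancel0:
  assumes "\<And>v. v \<noteq> (i,True) \<Longrightarrow> v \<noteq> (i,False) \<Longrightarrow> f1 v = f0 v" "dle q 0"
  shows "msub f1 q = msub f0 q"
  unfolding msub_def
proof (rule sum.cong[OF refl])
  fix m assume "m \<in> ks q"
  then have "card (ks m) = 0" using card_keys_le_deg[of m] assms(2) by (auto simp: dle_def)
  then have "ks m = {}" by simp
  then show "sg 0 (lk q m) * (\<Prod>v\<in>ks m. f1 v) = sg 0 (lk q m) * (\<Prod>v\<in>ks m. f0 v)" by simp
qed

context sos_setting begin

lemma Q_nth: "j < length Q \<Longrightarrow> dle (Q!j) k \<and> vin (Q!j) (twin_vars n)"
  using Qok nth_mem by blast

lemma K_cheap:
  assumes l: "l = (i, c0)" "i < n" "i \<notin> fst ` \<rho>" and P: "P (insert (tw l) \<rho>) E C" and kC: "k \<le> C"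
  shows "\<exists>H. dle H (C - 1) \<and> vin H (twin_vars n) \<and> Kc \<rho> E C (\<lambda>b. -1 + bv b (tw l) * eval (bv b) H)"
proof -
  obtain rs ts where 1: "length ts = length Q" "\<forall>r\<in>set rs. dle r E \<and> vin r (twin_vars n)"
   "\<forall>t\<in>set ts. dle t (C - k) \<and> vin t (twin_vars n)"
   "\<forall>b\<in>Cub (insert (tw l) \<rho>). -1 = (\<Sum>r\<leftarrow>rs. eval (bv b) r ^ 2) + (\<Sum>j<length Q. eval (bv b) (ts!j) * eval (bv b) (Q!j))"
    using P unfolding Kc_def P_def by blast
  define f0 where "f0 v = (if v = l then 1 else if v = tw l then 0 else Var v)" for v
  define f1 where "f1 v = (if v = l then 0 else if v = tw l then 1 else Var v)" for v
  have twl: "tw l = (i, \<not> c0)" using l(1) by (simp add: tw_def)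
  have ev0: "eval (bv b) (f0 v) = bv (b(i := c0)) v" for b v
    unfolding f0_def using l(1) by (cases v) (auto simp: bv_def tw_def)
  have ev1: "eval (bv b) (f1 v) = bv (b(i := \<not> c0)) v" for b v
    unfolding f1_def using l(1) by (cases v) (auto simp: bv_def tw_def)
  have df0: "dle (f0 v) 1" "dle (f1 v) 1" for v by (auto simp: f0_def f1_def dle_Var)
  have vf: "vin (f0 v) (twin_vars n)" "vin (f1 v) (twin_vars n)" if "v \<in> twin_vars n" for v
    using that by (auto simp: f0_def f1_def intro: vin_Var)
  have fsame: "f1 v = f0 v" if "v \<noteq> (i,True)" "v \<noteq> (i,False)" for v
    using that l(1) twl by (cases c0) (auto simp: f0_def f1_def)
  have fconst: "dle (f0 (i,True)) 0" "dle (f0 (i,False)) 0" "dle (f1 (i,True)) 0" "dle (f1 (i,False)) 0"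
    using l(1) twl by (cases c0; auto simp: f0_def f1_def)+
  define H where "H = (\<Sum>j<length Q. msub f0 (ts!j) * (msub f1 (Q!j) - msub f0 (Q!j)))"
  have tsj: "j < length Q \<Longrightarrow> dle (ts!j) (C - k) \<and> vin (ts!j) (twin_vars n)" for j
    using 1(1,3) nth_mem by metis
  have dH: "dle H (C - 1)" unfolding H_def
  proof (rule dle_sum)
    fix j assume "j \<in> {..<length Q}"
    then have j: "j < length Q" by simp
    show "dle (msub f0 (ts!j) * (msub f1 (Q!j) - msub f0 (Q!j))) (C - 1)"
    proof (cases "k = 0")
      case True
      then have "msub f1 (Q!j) = msub f0 (Q!j)" using Q_nth[OF j] fsame by (intro msub_cancel0) auto
      then show ?thesis by simp
    next
      case False
      have "dle (msub f0 (ts!j) * (msub f1 (Q!j) - msub f0 (Q!j))) ((C - k) + (k - 1))"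
        by (intro dle_mult dle_msub df0 msub_cancel[of i f1 f0 "Q!j" k] fsame fconst)
          (use tsj[OF j] Q_nth[OF j] in auto)
      then show ?thesis by (rule dle_mono) (use False kC in simp)
    qed
  qed
  have vH: "vin H (twin_vars n)" unfolding H_def
  proof (intro vin_sum vin_mult vin_diff)
    fix j assume "j \<in> {..<length Q}"
    then have j: "j < length Q" by simp
    show "vin (msub f0 (ts!j)) (twin_vars n)" by (rule vin_msub2[OF conjunct2[OF tsj[OF j]] vf(1)])
    show "vin (msub f0 (Q!j)) (twin_vars n)" by (rule vin_msub2[OF conjunct2[OF Q_nth[OF j]] vf(1)])
    show "vin (msub f1 (Q!j)) (twin_vars n)" by (rule vin_msub2[OF conjunct2[OF Q_nth[OF j]] vf(2)])
  qed
  have Kc: "Kc \<rho> E C (\<lambda>b. -1 + bv b (tw l) * eval (bv b) H)"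
  proof (rule KcI[where rs="map (msub f0) rs" and ts="map (msub f0) ts"])
    fix r assume "r \<in> set (map (msub f0) rs)"
    then show "dle r E \<and> vin r (twin_vars n)" using 1(2) by (auto intro: dle_msub df0 vin_msub2 vf)
  next
    fix t assume "t \<in> set (map (msub f0) ts)"
    then show "dle t (C - k) \<and> vin t (twin_vars n)" using 1(3) by (auto intro: dle_msub df0 vin_msub2 vf)
  next
    fix b assume b: "b \<in> Cub \<rho>"
    let ?b0 = "b(i := c0)"
    have b0C: "?b0 \<in> Cub (insert (tw l) \<rho>)"
    proof -
      have "bv ?b0 (tw l) = 0" using twl by (simp add: bv_def)
      moreover have "bv ?b0 l' = 0" if "l' \<in> \<rho>" for l'
      proof -
        have "fst l' \<noteq> i" using that l(3) by force
        then have "bv ?b0 l' = bv b l'" by (simp add: bv_def)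
        then show ?thesis using b that by (simp add: Cub_def)
      qed
      ultimately show ?thesis by (simp add: Cub_def)
    qed
    have e0: "eval (bv b) (msub f0 p) = eval (bv ?b0) p" for p by (rule msub_bool) (rule ev0)
    have e1: "eval (bv b) (msub f1 p) = eval (bv (b(i := \<not> c0))) p" for p by (rule msub_bool) (rule ev1)
    have qdec: "eval (bv b) q = eval (bv b) (msub f0 q) + bv b (tw l) * (eval (bv b) (msub f1 q) - eval (bv b) (msub f0 q))" for q
    proof (cases "b i = c0")
      case True
      then have "?b0 = b" by auto
      moreover have "bv b (tw l) = 0" using True twl by (simp add: bv_def)
      ultimately show ?thesis using e0 by simp
    next
      case False
      then have "b(i := \<not> c0) = b" by (auto simp: fun_eq_iff)
      moreover have "bv b (tw l) = 1" using False twl by (simp add: bv_def)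
      ultimately show ?thesis using e1 by simp
    qed
    have id0: "-1 = (\<Sum>r\<leftarrow>rs. eval (bv ?b0) r ^ 2) + (\<Sum>j<length Q. eval (bv ?b0) (ts!j) * eval (bv ?b0) (Q!j))"
      using 1(4) b0C by blast
    have sq: "(\<Sum>r\<leftarrow>map (msub f0) rs. eval (bv b) r ^ 2) = (\<Sum>r\<leftarrow>rs. eval (bv ?b0) r ^ 2)"
      by (simp add: e0 o_def)
    have tq: "(\<Sum>j<length Q. eval (bv b) (map (msub f0) ts ! j) * eval (bv b) (Q!j))
      = (\<Sum>j<length Q. eval (bv ?b0) (ts!j) * eval (bv ?b0) (Q!j)) + bv b (tw l) * eval (bv b) H"
    proof -
      have "(\<Sum>j<length Q. eval (bv b) (map (msub f0) ts ! j) * eval (bv b) (Q!j))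
        = (\<Sum>j<length Q. eval (bv b) (msub f0 (ts!j)) * (eval (bv b) (msub f0 (Q!j)) +
            bv b (tw l) * (eval (bv b) (msub f1 (Q!j)) - eval (bv b) (msub f0 (Q!j)))))"
        using 1(1) by (intro sum.cong refl) (simp add: qdec[symmetric])
      also have "\<dots> = (\<Sum>j<length Q. eval (bv ?b0) (ts!j) * eval (bv ?b0) (Q!j) +
          bv b (tw l) * (eval (bv b) (msub f0 (ts!j)) * (eval (bv b) (msub f1 (Q!j)) - eval (bv b) (msub f0 (Q!j)))))"
        by (intro sum.cong refl) (simp add: e0 algebra_simps)
      also have "\<dots> = (\<Sum>j<length Q. eval (bv ?b0) (ts!j) * eval (bv ?b0) (Q!j)) + bv b (tw l) * eval (bv b) H"
        unfolding H_def by (simp only: sum.distrib sum_distrib_left eval_sum eval_mult eval_diff)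
      finally show ?thesis .
    qed
    show "-1 + bv b (tw l) * eval (bv b) H = (\<Sum>r\<leftarrow>map (msub f0) rs. eval (bv b) r ^ 2) +
      (\<Sum>j<length Q. eval (bv b) (map (msub f0) ts ! j) * eval (bv b) (Q!j))"
      unfolding sq tq using id0 by simp
  qed (use 1 in simp)
  show ?thesis using dH vH Kc by blast
qed

lemma combine:
  assumes l: "l = (i,c0)" "i < n" "i \<notin> fst ` \<rho>" and P0: "P (insert l \<rho>) e c"
    and P1: "P (insert (tw l) \<rho>) (e+1) (c+1)" and kc: "k \<le> c" and ce: "c + 1 \<le> 2*(e+1)"
  shows "P \<rho> (e+1) (c+1)"
proof -
  have ln: "l \<in> twin_vars n" using l by (simp add: twin_vars_def)
  have Kn: "Kc \<rho> (e+1) (c+1) (\<lambda>b. - bv b (tw l))" by (rule K_neg_lit[OF P0 kc ln])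
  obtain H where H: "dle H (c + 1 - 1)" "vin H (twin_vars n)" "Kc \<rho> (e+1) (c+1) (\<lambda>b. -1 + bv b (tw l) * eval (bv b) H)"
    using K_cheap[OF l P1] kc by auto
  have dH: "dle H (2*(e+1) - 1)" by (rule dle_mono[OF H(1)]) (use ce in simp)
  have K2: "Kc \<rho> (e+1) (c+1) (\<lambda>b. (-1) * bv b (tw l) * eval (bv b) H + 1/2)"
    by (rule K_poly_pm[OF Kn dH H(2) ln]) auto
  have "Kc \<rho> (e+1) (c+1) (\<lambda>b. 2 * ((-1 + bv b (tw l) * eval (bv b) H) + ((-1) * bv b (tw l) * eval (bv b) H + 1/2)))"
    by (rule K_scale[OF K_add[OF H(3) K2]]) simp
  then show ?thesis unfolding P_def by (rule K_cong) simp
qed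

end

lemma prod_zero_ex: "finite S \<Longrightarrow> v \<in> S \<Longrightarrow> f v = (0::rpoly) \<Longrightarrow> (\<Prod>v\<in>S. f v) = 0"
  by (simp add: prod.remove)

lemma sum_indicator_card: "finite S \<Longrightarrow> (\<Sum>v\<in>S. if P v then 0 else (1::nat)) = card {v\<in>S. \<not> P v}"
proof (induction S rule: finite_induct)
  case (insert x F)
  have "{v \<in> insert x F. \<not> P v} = (if P x then {v\<in>F. \<not> P v} else insert x {v\<in>F. \<not> P v})" by auto
  then show ?case using insert by auto
qed simp

locale sos_ref = sos_setting +
  fixes rs0 ts0 :: "rpoly list" and us0 vs0 :: "nat \<Rightarrow> rpoly"
  assumes ref: "sos_refutation n Q rs0 ts0 us0 vs0"
begin

definition M where "M = significant_monomials rs0 ts0"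

lemma finite_M: "finite M"
  by (simp add: M_def significant_monomials_def)

lemma M_vars: "m \<in> M \<Longrightarrow> ks m \<subseteq> twin_vars n"
proof -
  assume "m \<in> M"
  then obtain p where p: "p \<in> set rs0 \<union> set ts0" "m \<in> ks p" by (auto simp: M_def significant_monomials_def)
  have "vin p (twin_vars n)" using ref p(1) by (auto simp: sos_refutation_def pvars_iff)
  then show ?thesis using p(2) by (auto simp: vin_def)
qed

lemma ref_eval: "-1 = (\<Sum>r\<leftarrow>rs0. eval (bv b) r ^ 2) + (\<Sum>j<length Q. eval (bv b) (ts0!j) * eval (bv b) (Q!j))"
proof -
  have eq: "- 1 = (\<Sum>r\<leftarrow>rs0. r * r) + (\<Sum>j<length Q. ts0 ! j * Q ! j)
           + (\<Sum>i<n. us0 i * (Var (i, True) * Var (i, True) - Var (i, True))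
                     + vs0 i * (Var (i, True) + Var (i, False) - 1))"
    using ref by (simp add: sos_refutation_def)
  have "eval (bv b) (-1) = eval (bv b) ((\<Sum>r\<leftarrow>rs0. r * r) + (\<Sum>j<length Q. ts0 ! j * Q ! j)
           + (\<Sum>i<n. us0 i * gA i + vs0 i * gB i))"
    by (subst eq) (simp add: gA_def gB_def)
  then show ?thesis by (simp add: power2_eq_square del: eval_uminus eval_one) simp
qed

definition killed :: "var set \<Rightarrow> monom \<Rightarrow> bool" where
  "killed \<rho> m \<longleftrightarrow> (\<exists>v\<in>ks m. v \<in> \<rho>)"

definition width :: "var set \<Rightarrow> monom \<Rightarrow> nat" where
  "width \<rho> m = card {v\<in>ks m. fst v \<notin> fst ` \<rho>}"

lemma leaf:
  assumes "\<forall>m\<in>M. killed \<rho> m \<or> width \<rho> m \<le> d"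
  shows "P \<rho> d (d + k)"
proof -
  define f where "f v = (if v \<in> \<rho> then 0 else if tw v \<in> \<rho> then 1 else Var v)" for v
  have evf: "eval (bv b) (f v) = bv b v" if "b \<in> Cub \<rho>" for b v
  proof -
    have "bv b v = 1" if "tw v \<in> \<rho>" using \<open>b \<in> Cub \<rho>\<close> that bv_tw[of b v] by (auto simp: Cub_def)
    then show ?thesis using \<open>b \<in> Cub \<rho>\<close> by (auto simp: f_def Cub_def)
  qed
  have vf: "vin (f v) (twin_vars n)" if "v \<in> twin_vars n" for v
    using that by (auto simp: f_def intro: vin_Var)
  have dl: "dle (msub f r) d" if r: "r \<in> set rs0 \<union> set ts0" for r
  proof (rule dle_msub_gen)
    fix m assume m: "m \<in> ks r"
    then have mM: "m \<in> M" using r by (auto simp: M_def significant_monomials_def)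
    show "dle (\<Prod>v\<in>ks m. f v) d"
    proof (cases "killed \<rho> m")
      case True
      then obtain v where "v \<in> ks m" "v \<in> \<rho>" by (auto simp: killed_def)
      then have "(\<Prod>v\<in>ks m. f v) = 0" by (intro prod_zero_ex) (auto simp: f_def)
      then show ?thesis by simp
    next
      case False
      have "dle (\<Prod>v\<in>ks m. f v) (\<Sum>v\<in>ks m. if fst v \<in> fst ` \<rho> then 0 else 1)"
      proof (rule dle_prod_gen)
        fix v assume v: "v \<in> ks m"
        then have "v \<notin> \<rho>" using False by (auto simp: killed_def)
        show "dle (f v) (if fst v \<in> fst ` \<rho> then 0 else 1)"
        proof (cases "fst v \<in> fst ` \<rho>")
          case True
          then obtain c' where c': "(fst v, c') \<in> \<rho>" by force
          have "c' \<noteq> snd v"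
          proof
            assume "c' = snd v"
            with c' have "(fst v, snd v) \<in> \<rho>" by simp
            then show False using \<open>v \<notin> \<rho>\<close> by simp
          qed
          then have "c' = (\<not> snd v)" by auto
          then have "tw v \<in> \<rho>" using c' by (simp add: tw_def)
          then show ?thesis using True \<open>v \<notin> \<rho>\<close> by (simp add: f_def)
        next
          case F2: False
          have "tw v \<notin> \<rho>"
          proof
            assume "tw v \<in> \<rho>"
            then have "fst (tw v) \<in> fst ` \<rho>" by (rule imageI)
            then show False using F2 by (simp add: tw_def)
          qed
          then show ?thesis using F2 \<open>v \<notin> \<rho>\<close> by (simp add: f_def dle_Var)
        qed
      qed simp
      moreover have "(\<Sum>v\<in>ks m. if fst v \<in> fst ` \<rho> then 0 else 1) = width \<rho> m"
        unfolding width_def by (rule sum_indicator_card) simp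
      moreover have "width \<rho> m \<le> d" using assms mM False by blast
      ultimately show ?thesis by (metis dle_mono)
    qed
  qed
  have vv: "vin r (twin_vars n)" if "r \<in> set rs0 \<union> set ts0" for r
    using ref that by (auto simp: sos_refutation_def pvars_iff)
  show ?thesis unfolding P_def
  proof (rule KcI[where rs="map (msub f) rs0" and ts="map (msub f) ts0"])
    show "length (map (msub f) ts0) = length Q" using ref by (simp add: sos_refutation_def)
  next
    fix r assume "r \<in> set (map (msub f) rs0)"
    then obtain x where x: "x \<in> set rs0" "r = msub f x" by auto
    show "dle r d \<and> vin r (twin_vars n)" using dl[of x] vin_msub2[OF vv[of x] vf] x by auto
  next
    fix t assume "t \<in> set (map (msub f) ts0)"
    then obtain x where x: "x \<in> set ts0" "t = msub f x" by auto
    show "dle t (d + k - k) \<and> vin t (twin_vars n)" using dl[of x] vin_msub2[OF vv[of x] vf] x by auto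
  next
    fix b assume b: "b \<in> Cub \<rho>"
    have e: "eval (bv b) (msub f p) = eval (bv b) p" for p by (rule msub_bool) (rule evf[OF b])
    have lts: "length ts0 = length Q" using ref by (simp add: sos_refutation_def)
    show "-1 = (\<Sum>r\<leftarrow>map (msub f) rs0. eval (bv b) r ^ 2) +
      (\<Sum>j<length Q. eval (bv b) (map (msub f) ts0 ! j) * eval (bv b) (Q!j))"
    proof -
      have A: "(\<Sum>r\<leftarrow>map (msub f) rs0. eval (bv b) r ^ 2) = (\<Sum>r\<leftarrow>rs0. eval (bv b) r ^ 2)"
        by (simp add: e o_def)
      have B: "(\<Sum>j<length Q. eval (bv b) (map (msub f) ts0 ! j) * eval (bv b) (Q!j))
         = (\<Sum>j<length Q. eval (bv b) (ts0 ! j) * eval (bv b) (Q!j))"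
        using lts by (intro sum.cong refl) (simp add: e)
      show ?thesis unfolding A B by (rule ref_eval)
    qed
  qed
qed

end

lemma card_filter_sum: "finite A \<Longrightarrow> card {x\<in>A. P x} = (\<Sum>x\<in>A. if P x then 1 else (0::nat))"
  by (simp add: sum.If_cases Int_def)

lemma double_count:
  assumes "finite A" "finite B"
  shows "(\<Sum>a\<in>A. card {b\<in>B. R a b}) = (\<Sum>b\<in>B. card {a\<in>A. R a b})"
  using assms by (simp add: card_filter_sum sum.swap[of _ A B])

lemma finite_twin: "finite (twin_vars n)"
proof -
  have "twin_vars n \<subseteq> {..<n} \<times> UNIV" by (auto simp: twin_vars_def)
  then show ?thesis by (rule finite_subset) simp
qed

lemma card_twin: "card (twin_vars n) = 2 * n"
proof -
  have "twin_vars n = {..<n} \<times> (UNIV :: bool set)" by (auto simp: twin_vars_def)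
  then show ?thesis by (simp add: card_cartesian_product)
qed

context sos_ref begin

definition W :: "nat \<Rightarrow> var set \<Rightarrow> monom set" where
  "W d \<rho> = {m\<in>M. \<not> killed \<rho> m \<and> d < width \<rho> m}"

lemma finite_W: "finite (W d \<rho>)" using finite_M by (simp add: W_def)

lemma leaf_W: "W d \<rho> = {} \<Longrightarrow> P \<rho> d (d + k)"
  by (rule leaf) (auto simp: W_def)

lemma W_ins: "W d (insert l \<rho>) \<subseteq> W d \<rho>"
proof
  fix m assume m: "m \<in> W d (insert l \<rho>)"
  have "width (insert l \<rho>) m \<le> width \<rho> m"
    unfolding width_def by (rule card_mono) auto
  then show "m \<in> W d \<rho>" using m by (auto simp: W_def killed_def)
qed

lemma W_ins_excl: "m \<in> W d (insert l \<rho>) \<Longrightarrow> l \<notin> ks m"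
  by (auto simp: W_def killed_def)

lemma pick:
  assumes "W d \<rho> \<noteq> {}"
  shows "\<exists>l. l \<in> twin_vars n \<and> fst l \<notin> fst ` \<rho> \<and> d * card (W d \<rho>) \<le> (2*n) * card {m\<in>W d \<rho>. l \<in> ks m}"
proof (rule ccontr)
  assume neg: "\<not> ?thesis"
  define L where "L = {l\<in>twin_vars n. fst l \<notin> fst ` \<rho>}"
  define w where "w = card (W d \<rho>)"
  have fL: "finite L" using finite_twin by (simp add: L_def)
  have cL: "card L \<le> 2 * n" unfolding card_twin[symmetric] L_def by (rule card_mono[OF finite_twin]) auto
  have wm: "card {l\<in>L. l \<in> ks m} = width \<rho> m" if "m \<in> W d \<rho>" for m
  proof -
    have "ks m \<subseteq> twin_vars n" using that M_vars by (auto simp: W_def)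
    then have "{l\<in>L. l \<in> ks m} = {v\<in>ks m. fst v \<notin> fst ` \<rho>}" by (auto simp: L_def)
    then show ?thesis by (simp add: width_def)
  qed
  have "(\<Sum>l\<in>L. card {m\<in>W d \<rho>. l \<in> ks m}) = (\<Sum>m\<in>W d \<rho>. card {l\<in>L. l \<in> ks m})"
    by (rule double_count[OF fL finite_W])
  also have "\<dots> \<ge> (\<Sum>m\<in>W d \<rho>. Suc d)"
    by (rule sum_mono) (use wm in \<open>auto simp: W_def Suc_le_eq\<close>)
  finally have big: "(\<Sum>l\<in>L. card {m\<in>W d \<rho>. l \<in> ks m}) \<ge> Suc d * w" by (simp add: w_def mult.commute)
  have wpos: "w > 0" using assms finite_W by (simp add: w_def card_gt_0_iff)
  then have "L \<noteq> {}" using big by (auto)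
  have lt: "\<forall>l\<in>L. (2*n) * card {m\<in>W d \<rho>. l \<in> ks m} < d * w" using neg by (auto simp: L_def w_def not_le)
  have "(\<Sum>l\<in>L. (2*n) * card {m\<in>W d \<rho>. l \<in> ks m}) < (\<Sum>l\<in>L. d * w)"
    by (rule sum_strict_mono[OF fL \<open>L \<noteq> {}\<close>]) (use lt in auto)
  also have "\<dots> = card L * (d * w)" by simp
  also have "\<dots> \<le> (2 * n) * (d * w)" by (rule mult_right_mono[OF cL]) simp
  finally have "(2*n) * (\<Sum>l\<in>L. card {m\<in>W d \<rho>. l \<in> ks m}) < (2*n) * (d * w)"
    by (simp add: sum_distrib_left)
  then have "(\<Sum>l\<in>L. card {m\<in>W d \<rho>. l \<in> ks m}) < d * w" by simp
  then show False using big by (simp add: mult.commute)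
qed

end

context sos_ref begin

definition E0 :: "nat \<Rightarrow> nat" where "E0 d = max d ((d + k + 1) div 2)"

lemma C0_le: "d + k \<le> 2 * E0 d" unfolding E0_def by linarith

lemma tree:
  assumes alpha: "\<alpha> = real d / real (2*n)" and dn: "d \<le> 2*n"
  shows "(1 - \<alpha>)^j * real (card (W d \<rho>)) < 1 \<Longrightarrow> P \<rho> (E0 d + j) (d + k + j)"
proof (induction j arbitrary: \<rho>)
  case 0
  then have "W d \<rho> = {}" using finite_W by simp
  from K_mono[OF leaf_W[OF this, unfolded P_def]] show ?case unfolding P_def by (simp add: E0_def)
next
  case (Suc j)
  have a0: "0 \<le> \<alpha>" unfolding alpha by simp
  have a1: "\<alpha> \<le> 1"
  proof (cases "n = 0")
    case True then show ?thesis unfolding alpha by simp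
  next
    case False then show ?thesis unfolding alpha using dn by (simp add: field_simps)
  qed
  show ?case using Suc.prems
  proof (induction "card ({..<n} - fst ` \<rho>)" arbitrary: \<rho> rule: less_induct)
    case less
    show ?case
    proof (cases "W d \<rho> = {}")
      case True
      from K_mono[OF leaf_W[OF True, unfolded P_def]] show ?thesis unfolding P_def by (simp add: E0_def)
    next
      case False
      obtain l where l: "l \<in> twin_vars n" "fst l \<notin> fst ` \<rho>"
        "d * card (W d \<rho>) \<le> (2*n) * card {m\<in>W d \<rho>. l \<in> ks m}"
        using pick[OF False] by blast
      obtain i c0 where lic: "l = (i, c0)" by (cases l)
      have i: "i < n" "i \<notin> fst ` \<rho>" using l lic by (auto simp: twin_vars_def)
      define w where "w = card (W d \<rho>)"
      define cnt where "cnt = card {m\<in>W d \<rho>. l \<in> ks m}"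
      have cw: "cnt \<le> w" unfolding cnt_def w_def by (rule card_mono[OF finite_W]) auto
      have W1: "card (W d (insert l \<rho>)) \<le> w - cnt"
      proof -
        have "W d (insert l \<rho>) \<subseteq> W d \<rho> - {m\<in>W d \<rho>. l \<in> ks m}"
          using W_ins[of d l \<rho>] W_ins_excl[of _ d l \<rho>] by blast
        then have "card (W d (insert l \<rho>)) \<le> card (W d \<rho> - {m\<in>W d \<rho>. l \<in> ks m})"
          by (intro card_mono) (simp_all add: finite_W)
        also have "\<dots> = w - cnt" unfolding w_def cnt_def
          by (rule card_Diff_subset) (auto simp: finite_W)
        finally show ?thesis .
      qed
      have npos: "n > 0" using i by simp
      have "\<alpha> * w \<le> cnt"
      proof -
        have "d * w \<le> (2*n) * cnt" using l(3) unfolding w_def cnt_def .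
        then have "real (d * w) \<le> real ((2*n) * cnt)" by (simp only: of_nat_le_iff)
        then have "real d * real w \<le> real (2*n) * real cnt" by simp
        then show ?thesis unfolding alpha using npos by (simp add: field_simps)
      qed
      then have "real (w - cnt) \<le> (1 - \<alpha>) * w" using cw by (simp add: of_nat_diff algebra_simps)
      then have "real (card (W d (insert l \<rho>))) \<le> (1 - \<alpha>) * w" using W1
        by (smt (verit) of_nat_le_iff)
      then have "(1 - \<alpha>)^j * real (card (W d (insert l \<rho>))) \<le> (1 - \<alpha>)^j * ((1 - \<alpha>) * w)"
        by (rule mult_left_mono) (use a0 a1 in simp)
      also have "\<dots> = (1 - \<alpha>)^Suc j * w" by simp
      also have "\<dots> < 1" using less.prems unfolding w_def .
      finally have P1: "P (insert l \<rho>) (E0 d + j) (d + k + j)" by (rule Suc.IH)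
      have "real (card (W d (insert (tw l) \<rho>))) \<le> w"
        unfolding w_def by (simp add: card_mono[OF finite_W W_ins])
      then have "(1 - \<alpha>)^Suc j * real (card (W d (insert (tw l) \<rho>))) \<le> (1 - \<alpha>)^Suc j * w"
        by (rule mult_left_mono) (use a0 a1 in simp)
      also have "\<dots> < 1" using less.prems unfolding w_def .
      finally have pr2: "(1 - \<alpha>)^Suc j * real (card (W d (insert (tw l) \<rho>))) < 1" .
      have ftw: "fst (tw l) = i" using lic by (simp add: tw_def)
      have "card ({..<n} - fst ` insert (tw l) \<rho>) < card ({..<n} - fst ` \<rho>)"
      proof (rule psubset_card_mono)
        show "finite ({..<n} - fst ` \<rho>)" by simp
        show "{..<n} - fst ` insert (tw l) \<rho> \<subset> {..<n} - fst ` \<rho>"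
          using i ftw by auto
      qed
      then have P2: "P (insert (tw l) \<rho>) (E0 d + Suc j) (d + k + Suc j)"
        using less.hyps pr2 by blast
      have "P \<rho> (E0 d + j + 1) (d + k + j + 1)"
      proof (rule combine[OF lic i P1])
        show "P (insert (tw l) \<rho>) (E0 d + j + 1) (d + k + j + 1)" using P2 by simp
        show "k \<le> d + k + j" by simp
        show "d + k + j + 1 \<le> 2 * (E0 d + j + 1)" using C0_le[of d] by simp
      qed
      then show ?thesis by simp
    qed
  qed
qed

end

lemma decay:
  fixes \<alpha> s w :: real
  assumes a: "0 < \<alpha>" "\<alpha> \<le> 1" and s: "0 < s" and w: "w \<le> s" "0 \<le> w" and T: "T = nat \<lfloor>ln s / \<alpha>\<rfloor> + 1"
  shows "(1 - \<alpha>)^T * w < 1"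
proof -
  have "(1 - \<alpha>)^T \<le> exp (- \<alpha>)^T"
    by (rule power_mono) (use a exp_ge_add_one_self[of "-\<alpha>"] in auto)
  also have "\<dots> = exp (real T * (- \<alpha>))" using exp_of_nat_mult[of T "- \<alpha>"] by simp
  also have "\<dots> < exp (- ln s)"
  proof -
    have "ln s / \<alpha> < real_of_int \<lfloor>ln s / \<alpha>\<rfloor> + 1" by linarith
    also have "\<dots> \<le> real T" unfolding T by linarith
    finally have "ln s < real T * \<alpha>" using a by (simp add: field_simps)
    then show ?thesis by simp
  qed
  also have "\<dots> = 1 / s" using s by (simp add: exp_minus field_simps)
  finally have e: "(1 - \<alpha>)^T < 1 / s" .
  have "(1 - \<alpha>)^T * w \<le> (1 - \<alpha>)^T * s" by (rule mult_left_mono) (use w a in auto)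
  also have "\<dots> < (1 / s) * s" by (rule mult_strict_right_mono[OF e s])
  finally show ?thesis using s by simp
qed

lemma final_bound:
  fixes X L :: real and n d k T :: nat
  assumes X: "X > 0" "X^2 = 2*(real n+1)*L" and L: "L \<ge> 0" and d: "real d \<ge> X" "real d \<le> X + 1"
    and n: "n > 0" and T: "real T \<le> L / (real d / real (2*n)) + 1"
  shows "2*real d + k + 2*real T \<le> 4*X + k + 4"
proof -
  have dpos: "real d > 0" using X d by linarith
  have "L / (real d / real (2*n)) = 2 * real n * L / real d" using dpos by (simp add: field_simps)
  also have "\<dots> \<le> 2 * real n * L / X"
    by (rule divide_left_mono) (use X d L in auto)
  also have "\<dots> \<le> 2 * (real n + 1) * L / X"
    by (rule divide_right_mono) (use X L in \<open>auto simp: mult_right_mono\<close>)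
  also have "\<dots> = X^2 / X" using X by (simp add: power2_eq_square field_simps)
  also have "\<dots> = X" using X by (simp add: power2_eq_square field_simps)
  finally have "L / (real d / real (2*n)) \<le> X" .
  then show ?thesis using T d by linarith
qed

context sos_setting begin

lemma final_ref:
  assumes P: "P {} e c" and kc: "k \<le> c"
  shows "\<exists>rs ts us vs. sos_refutation n Q rs ts us vs \<and> sos_degree n Q rs ts us vs \<le> max (2*e) c"
proof -
  obtain rs ts where 1: "length ts = length Q" "\<forall>r\<in>set rs. dle r e \<and> vin r (twin_vars n)"
   "\<forall>t\<in>set ts. dle t (c - k) \<and> vin t (twin_vars n)"
   "\<forall>b\<in>Cub {}. -1 = (\<Sum>r\<leftarrow>rs. eval (bv b) r ^ 2) + (\<Sum>j<length Q. eval (bv b) (ts!j) * eval (bv b) (Q!j))"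
    using P unfolding Kc_def P_def by blast
  define D where "D = max (2*e) c"
  define A where "A = (\<Sum>r\<leftarrow>rs. r * r)"
  define B where "B = (\<Sum>j<length Q. ts ! j * Q ! j)"
  define p where "p = -1 - A - B"
  have tsj: "j < length Q \<Longrightarrow> dle (ts!j) (c - k) \<and> vin (ts!j) (twin_vars n)" for j
    using 1(1,3) nth_mem by metis
  have dA: "dle A D" unfolding A_def
    by (rule dle_sum_list) (use 1(2) in \<open>auto simp: D_def intro!: dle_mono[OF dle_mult, of _ e _ e]\<close>)
  have dB: "dle B D" unfolding B_def
  proof (rule dle_sum)
    fix j assume "j \<in> {..<length Q}"
    then have j: "j < length Q" by simp
    have "dle (ts!j * Q!j) ((c - k) + k)" by (rule dle_mult) (use tsj[OF j] Q_nth[OF j] in auto)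
    then show "dle (ts!j * Q!j) D" by (rule dle_mono) (use kc in \<open>simp add: D_def\<close>)
  qed
  have dp: "dle p D" unfolding p_def by (intro dle_diff dA dB) simp
  have vp: "vin p (twin_vars n)" unfolding p_def A_def B_def
    by (intro vin_diff vin_sum_list vin_sum vin_mult vin_one) (use 1(2) tsj Q_nth in auto)
  have ep: "\<forall>b. eval (bv b) p = 0"
  proof
    fix b
    have "b \<in> Cub {}" by (simp add: Cub_def)
    then have "-1 = (\<Sum>r\<leftarrow>rs. eval (bv b) r ^ 2) + (\<Sum>j<length Q. eval (bv b) (ts!j) * eval (bv b) (Q!j))"
      using 1(4) by blast
    moreover have "eval (bv b) A = (\<Sum>r\<leftarrow>rs. eval (bv b) r ^ 2)" unfolding A_def by (simp add: power2_eq_square)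
    moreover have "eval (bv b) B = (\<Sum>j<length Q. eval (bv b) (ts!j) * eval (bv b) (Q!j))" unfolding B_def by simp
    ultimately show "eval (bv b) p = 0" unfolding p_def by simp
  qed
  obtain u w where uw: "p = (\<Sum>i<n. u i * gA i + w i * gB i)"
    "\<forall>i<n. dle (u i * gA i) D \<and> dle (w i * gB i) D \<and> vin (u i) (twin_vars n) \<and> vin (w i) (twin_vars n)"
    using ideal_complete[OF vp dp ep] unfolding J_def by blast
  have ref: "sos_refutation n Q rs ts u w"
    unfolding sos_refutation_def
  proof (intro conjI)
    show "length ts = length Q" by (rule 1(1))
    show "\<forall>r\<in>set rs. pvars r \<subseteq> twin_vars n" using 1(2) by (simp add: pvars_iff)
    show "\<forall>t\<in>set ts. pvars t \<subseteq> twin_vars n" using 1(3) by (simp add: pvars_iff)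
    show "\<forall>i<n. pvars (u i) \<subseteq> twin_vars n \<and> pvars (w i) \<subseteq> twin_vars n" using uw(2) by (simp add: pvars_iff)
    have "-1 = A + B + p" unfolding p_def by simp
    then show "- 1 = (\<Sum>r\<leftarrow>rs. r * r) + (\<Sum>j<length Q. ts ! j * Q ! j)
           + (\<Sum>i<n. u i * (Var (i, True) * Var (i, True) - Var (i, True))
                     + w i * (Var (i, True) + Var (i, False) - 1))"
      unfolding uw(1) A_def B_def gA_def gB_def .
  qed
  have deg: "sos_degree n Q rs ts u w \<le> D"
    unfolding sos_degree_def
  proof (rule Max.boundedI)
    show "finite ({0} \<union> {pdeg (r * r) |r. r \<in> set rs} \<union> {pdeg (ts ! j * Q ! j) |j. j < length Q} \<union>
     {pdeg (u i * (Var (i, True) * Var (i, True) - Var (i, True))) |i. i < n} \<union>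
     {pdeg (w i * (Var (i, True) + Var (i, False) - 1)) |i. i < n})"
      by (simp add: finite_image_set)
  next
    fix x assume "x \<in> {0} \<union> {pdeg (r * r) |r. r \<in> set rs} \<union> {pdeg (ts ! j * Q ! j) |j. j < length Q} \<union>
     {pdeg (u i * (Var (i, True) * Var (i, True) - Var (i, True))) |i. i < n} \<union>
     {pdeg (w i * (Var (i, True) + Var (i, False) - 1)) |i. i < n}"
    then consider "x = 0" | r where "r \<in> set rs" "x = pdeg (r * r)" | j where "j < length Q" "x = pdeg (ts ! j * Q ! j)"
      | i where "i < n" "x = pdeg (u i * gA i)" | i where "i < n" "x = pdeg (w i * gB i)"
      unfolding gA_def gB_def by blast
    then show "x \<le> D"
    proof cases
      case 1 then show ?thesis by simp
    next
      case (2 r)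
      then have "dle (r * r) (e + e)" using 1(2) by (intro dle_mult) auto
      then have "dle (r * r) D" by (rule dle_mono) (simp add: D_def)
      then show ?thesis using 2(2) by (simp add: pdeg_le_iff)
    next
      case (3 j)
      have "dle (ts!j * Q!j) ((c - k) + k)" by (rule dle_mult) (use tsj[OF 3(1)] Q_nth[OF 3(1)] in auto)
      then have "dle (ts!j * Q!j) D" by (rule dle_mono) (use kc in \<open>simp add: D_def\<close>)
      then show ?thesis using 3(2) by (simp add: pdeg_le_iff)
    next
      case (4 i) then show ?thesis using uw(2) by (simp add: pdeg_le_iff)
    next
      case (5 i) then show ?thesis using uw(2) by (simp add: pdeg_le_iff)
    qed
  qed simp
  show ?thesis using ref deg unfolding D_def by blast
qed

end

lemma sum_list_zero': "(\<And>x. x \<in> set xs \<Longrightarrow> f x = (0::real)) \<Longrightarrow> sum_list (map f xs) = 0"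
  by (induction xs) auto

context sos_ref begin

lemma s1_empty: assumes c: "card M = 1" shows "W 0 {} = {}"
proof (rule ccontr)
  assume ne: "W 0 {} \<noteq> {}"
  obtain m0 where M: "M = {m0}" using c card_1_singletonE by blast
  from ne obtain m where "m \<in> W 0 {}" by auto
  then have m: "m = m0" "0 < width {} m" using M by (auto simp: W_def)
  then have "ks m0 \<noteq> {}" by (auto simp: width_def)
  then obtain v0 where v0: "v0 \<in> ks m0" by blast
  define b where "b = (\<lambda>_::nat. \<not> snd v0)"
  have bv0: "bv b v0 = 0" by (simp add: bv_def b_def)
  have mv: "mval (bv b) m0 = 0"
    unfolding mval_bool using v0 bv0 by (simp add: prod.remove[OF finite_keys v0])
  have ev0: "eval (bv b) r = 0" if "r \<in> set rs0 \<union> set ts0" for r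
  proof -
    have "ks r \<subseteq> {m0}" using that M by (auto simp: M_def significant_monomials_def)
    then have "eval (bv b) r = (\<Sum>m\<in>{m0}. lk r m * mval (bv b) m)" by (rule eval_superset[OF finite.intros(2)[OF finite.emptyI]])
    then show ?thesis using mv by simp
  qed
  have lts: "length ts0 = length Q" using ref by (simp add: sos_refutation_def)
  have "(\<Sum>r\<leftarrow>rs0. eval (bv b) r ^ 2) = 0" by (rule sum_list_zero') (simp add: ev0)
  moreover have "(\<Sum>j<length Q. eval (bv b) (ts0!j) * eval (bv b) (Q!j)) = 0"
    by (rule sum.neutral) (use lts ev0 nth_mem in fastforce)
  ultimately show False using ref_eval[of b] by simp
qed

end

theorem theorem1:
  fixes n k s :: nat and Q :: "rpoly list"
  assumes "\<forall>q\<in>set Q. pdeg q \<le> k \<and> pvars q \<subseteq> twin_vars n"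
    and "\<exists>rs ts us vs. sos_refutation n Q rs ts us vs \<and> card (significant_monomials rs ts) = s"
  shows "\<exists>rs ts us vs. sos_refutation n Q rs ts us vs \<and>
           real (sos_degree n Q rs ts us vs) \<le> 4 * sqrt (2 * (real n + 1) * ln (real s)) + real k + 4"
proof -
  obtain rs0 ts0 us0 vs0 where ref: "sos_refutation n Q rs0 ts0 us0 vs0"
    and sc: "card (significant_monomials rs0 ts0) = s" using assms(2) by blast
  have Qok: "\<forall>q\<in>set Q. dle q k \<and> vin q (twin_vars n)" using assms(1) by (simp add: pdeg_le_iff pvars_iff)
  interpret S: sos_ref n k Q rs0 ts0 us0 vs0 by unfold_locales (use Qok ref in auto)
  have cM: "card S.M = s" using sc by (simp add: S.M_def)
  define L where "L = ln (real s)"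
  define X where "X = sqrt (2 * (real n + 1) * L)"
  have key: "\<exists>e c. S.P {} e c \<and> k \<le> c \<and> real (max (2*e) c) \<le> 4 * X + real k + 4"
  proof (cases "s \<ge> 2")
    case False
    have W0: "S.W 0 {} = {}"
    proof (cases "s = 0")
      case True
      then have "S.M = {}" using cM S.finite_M by simp
      then show ?thesis by (simp add: S.W_def)
    next
      case False
      then have "card S.M = 1" using \<open>\<not> 2 \<le> s\<close> cM by simp
      then show ?thesis by (rule S.s1_empty)
    qed
    have P: "S.P {} (S.E0 0 + 0) (0 + k + 0)" by (rule S.tree[of 0 0]) (simp_all add: W0)
    have "s = 0 \<or> s = 1" using False by auto
    then have "L = 0" unfolding L_def by auto
    then have X0: "X \<ge> 0" by (simp add: X_def)
    have "max (2 * S.E0 0) k \<le> k + 1" by (simp add: S.E0_def)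
    then have "real (max (2 * S.E0 0) k) \<le> 4 * X + real k + 4" using X0 by linarith
    then show ?thesis using P by (intro exI[of _ "S.E0 0"] exI[of _ k]) simp
  next
    case s2: True
    have Lpos: "L > 0" unfolding L_def using s2 by simp
    have Xpos: "X > 0" unfolding X_def using Lpos by simp
    have X2: "X^2 = 2 * (real n + 1) * L" unfolding X_def using Lpos by simp
    define d where "d = nat \<lceil>X\<rceil>"
    have dX: "real d = of_int \<lceil>X\<rceil>" unfolding d_def using Xpos by simp
    have d: "real d \<ge> X" "real d \<le> X + 1" unfolding dX by simp_all
    have d1: "d \<ge> 1" using d(1) Xpos by simp
    have E0d: "2 * S.E0 d \<le> 2 * d + k" using d1 by (simp add: S.E0_def)
    show ?thesis
    proof (cases "d \<le> 2*n")
      case False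
      have W0: "S.W d {} = {}"
      proof -
        have "S.width {} m \<le> 2 * n" if "m \<in> S.M" for m
        proof -
          have "S.width {} m = card (ks m)" by (simp add: S.width_def)
          also have "\<dots> \<le> card (twin_vars n)" by (rule card_mono[OF finite_twin S.M_vars[OF that]])
          finally show ?thesis by (simp add: card_twin)
        qed
        then show ?thesis using False by (force simp: S.W_def)
      qed
      have P: "S.P {} d (d + k)" by (rule S.leaf_W[OF W0])
      have "real (max (2 * d) (d + k)) \<le> 2 * real d + real k" by simp
      also have "\<dots> \<le> 4 * X + real k + 4" using d Xpos by linarith
      finally show ?thesis using P by (intro exI[of _ d] exI[of _ "d + k"]) simp
    next
      case True
      have npos: "n > 0" using True d1 by simp
      define \<alpha> where "\<alpha> = real d / real (2*n)"
      have \<alpha>: "0 < \<alpha>" "\<alpha> \<le> 1" unfolding \<alpha>_def using d1 npos True by (simp_all add: field_simps)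
      define T where "T = nat \<lfloor>L / \<alpha>\<rfloor> + 1"
      have cW: "card (S.W d {}) \<le> s"
        unfolding cM[symmetric] by (rule card_mono[OF S.finite_M]) (auto simp: S.W_def)
      have dec: "(1 - \<alpha>)^T * real (card (S.W d {})) < 1"
        by (rule decay[OF \<alpha>, of "real s"]) (use s2 cW in \<open>simp_all add: T_def L_def\<close>)
      have P: "S.P {} (S.E0 d + T) (d + k + T)" by (rule S.tree[OF \<alpha>_def True dec])
      have mx: "max (2 * (S.E0 d + T)) (d + k + T) \<le> 2 * d + k + 2 * T"
        using S.C0_le[of d] E0d by simp
      have Tb: "real T \<le> L / (real d / real (2*n)) + 1"
      proof -
        have "L / \<alpha> \<ge> 0" using Lpos \<alpha> by simp
        then have "real T = of_int \<lfloor>L / \<alpha>\<rfloor> + 1" unfolding T_def by simp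
        also have "\<dots> \<le> L / \<alpha> + 1" by simp
        finally show ?thesis unfolding \<alpha>_def .
      qed
      have Lnn: "L \<ge> 0" using Lpos by simp
      have "2 * real d + real k + 2 * real T \<le> 4 * X + real k + 4"
        by (rule final_bound[OF Xpos X2 Lnn d npos Tb])
      moreover have "real (max (2 * (S.E0 d + T)) (d + k + T)) \<le> 2 * real d + real k + 2 * real T"
      proof -
        have "real (max (2 * (S.E0 d + T)) (d + k + T)) \<le> real (2 * d + k + 2 * T)"
          using mx by (simp only: of_nat_le_iff)
        then show ?thesis by simp
      qed
      ultimately show ?thesis using P by (intro exI[of _ "S.E0 d + T"] exI[of _ "d + k + T"]) auto
    qed
  qed
  then obtain e c where ec: "S.P {} e c" "k \<le> c" "real (max (2*e) c) \<le> 4 * X + real k + 4" by blast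
  obtain rs ts us vs where r: "sos_refutation n Q rs ts us vs" "sos_degree n Q rs ts us vs \<le> max (2*e) c"
    using S.final_ref[OF ec(1,2)] by blast
  have "real (sos_degree n Q rs ts us vs) \<le> 4 * X + real k + 4"
    using r(2) ec(3) by (meson of_nat_le_iff order_trans)
  then show ?thesis using r(1) unfolding X_def L_def by blast
qed

end
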